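(* Let $d\ge 1$ be an integer and let $\{X_{\mathbf n};\ \mathbf n\in\mathbb N^d\}$ be a negatively associated field of identically distributed random variables. If $$\mathbb P\Big(\limsup_{\mathbf n\to\infty}\frac{|S_{\mathbf n}|}{(2d|\mathbf n|\log\log|\mathbf n|)^{1/2}}<\infty\Big)>0,$$ then $\mathbb E X_{\mathbf 1}=0$ and $\mathbb E\big[X_{\mathbf 1}^2\log^{d-1}(|X_{\mathbf 1}|)/\log\log(|X_{\mathbf 1}|)\big]<\infty$.
   Context: A finite family $\{X_i;1\le i\le n\}$ of random variables is negatively associated if for every pair of disjoint subsets $A,B\subset\{1,\dots,n\}$, $\operatorname{Cov}(f(X_i;i\in A),g(X_j;j\in B))\le 0$ whenever $f,g$ are coordinatewise non-decreasing and the covariance exists; an infinite family is negatively associated if every finite subfamily is. For $\mathbf n=(n_1,\dots,n_d)\in\mathbb N^d$, $|\mathbf n|=n_1\cdots n_d$; $\mathbf k\le\mathbf n$ means $k_i\le n_i$ for all $i$; $\mathbf 1=(1,\dots,1)$; $S_{\mathbf n}=\sum_{\mathbf k\le\mathbf n}X_{\mathbf k}$; $\mathbf n\to\infty$ means $n_1\to\infty,\dots,n_d\to\infty$. Throughout, $\log x=\ln(x\vee e)$. *)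

theory Defs
  imports "HOL-Probability.Probability"
begin

definition Log :: "real \<Rightarrow> real" where
  "Log x = ln (max x (exp 1))"

text \<open>Multi-indices in N^d are functions 'd \<Rightarrow> nat (with 'd finite, d = CARD('d))
  whose coordinates are all \<ge> 1.\<close>
definition pos_idx :: "('d \<Rightarrow> nat) set" where
  "pos_idx = {n. \<forall>i. 1 \<le> n i}"

definition idx_size :: "('d::finite \<Rightarrow> nat) \<Rightarrow> nat" where
  "idx_size n = (\<Prod>i\<in>UNIV. n i)"

definition partial_sum :: "('d::finite \<Rightarrow> nat) \<Rightarrow> (('d \<Rightarrow> nat) \<Rightarrow> 'a \<Rightarrow> real) \<Rightarrow> 'a \<Rightarrow> real" where
  "partial_sum n X \<omega> = (\<Sum>k\<in>{k. \<forall>i. 1 \<le> k i \<and> k i \<le> n i}. X k \<omega>)"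

definition mi_at_top :: "('d \<Rightarrow> nat) filter" where
  "mi_at_top = (INF i. filtercomap (\<lambda>n. n i) at_top)"

definition coord_mono :: "'i set \<Rightarrow> (('i \<Rightarrow> real) \<Rightarrow> real) \<Rightarrow> bool" where
  "coord_mono A f \<longleftrightarrow> (\<forall>x y. (\<forall>i\<in>A. x i \<le> y i) \<longrightarrow> f x \<le> f y)"

definition neg_assoc :: "'a measure \<Rightarrow> 'i set \<Rightarrow> ('i \<Rightarrow> 'a \<Rightarrow> real) \<Rightarrow> bool" where
  "neg_assoc M I X \<longleftrightarrow>
    (\<forall>A B (f :: ('i \<Rightarrow> real) \<Rightarrow> real) (g :: ('i \<Rightarrow> real) \<Rightarrow> real).
       finite A \<and> finite B \<and> A \<subseteq> I \<and> B \<subseteq> I \<and> A \<inter> B = {} \<and>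
       f \<in> borel_measurable (PiM A (\<lambda>_. borel)) \<and> g \<in> borel_measurable (PiM B (\<lambda>_. borel)) \<and>
       coord_mono A f \<and> coord_mono B g \<and>
       integrable M (\<lambda>\<omega>. f (restrict (\<lambda>i. X i \<omega>) A)) \<and>
       integrable M (\<lambda>\<omega>. g (restrict (\<lambda>i. X i \<omega>) B)) \<and>
       integrable M (\<lambda>\<omega>. f (restrict (\<lambda>i. X i \<omega>) A) * g (restrict (\<lambda>i. X i \<omega>) B))
       \<longrightarrow>
       (\<integral>\<omega>. f (restrict (\<lambda>i. X i \<omega>) A) * g (restrict (\<lambda>i. X i \<omega>) B) \<partial>M)
         - (\<integral>\<omega>. f (restrict (\<lambda>i. X i \<omega>) A) \<partial>M) * (\<integral>\<omega>. g (restrict (\<lambda>i. X i \<omega>) B) \<partial>M)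
         \<le> 0)"

end

theory Submission
  imports Defs
begin

lemma Log_ge_1: "Log x \<ge> 1"
proof -
  have "ln (exp 1) \<le> ln (max x (exp 1))" by (rule ln_mono) auto
  then show ?thesis unfolding Log_def by simp
qed

lemma Log_pos: "Log x > 0"
  using Log_ge_1[of x] by linarith

lemma Log_mono: "x \<le> y \<Longrightarrow> Log x \<le> Log y"
  unfolding Log_def by (intro ln_mono) (auto simp: less_max_iff_disj)

lemma Log_eq: "x \<ge> exp 1 \<Longrightarrow> Log x = ln x"
  unfolding Log_def by (simp add: max_absorb1)

lemma LL_eq: "x \<ge> exp (exp 1) \<Longrightarrow> Log (Log x) = ln (ln x)"
proof -
  assume x: "x \<ge> exp (exp 1)"
  have "exp 1 \<le> exp (exp (1::real))" by simp
  then have "x \<ge> exp 1" using x by linarith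
  then have "Log x = ln x" by (rule Log_eq)
  moreover have "ln x \<ge> exp 1" using x
    by (metis exp_gt_zero ln_exp ln_le_cancel_iff order_less_le_trans)
  ultimately show ?thesis by (simp add: Log_eq)
qed

lemma ev_mi_at_top:
  assumes "eventually P (mi_at_top :: ('d::finite \<Rightarrow> nat) filter)"
  shows "\<exists>N. \<forall>n. (\<forall>i. N \<le> n i) \<longrightarrow> P n"
proof -
  from assms obtain Q where Q: "\<forall>i\<in>UNIV. eventually (Q i) (filtercomap (\<lambda>n. n i) at_top)"
      and QP: "\<forall>y. (\<forall>i\<in>UNIV. Q i y) \<longrightarrow> P y"
    unfolding mi_at_top_def eventually_INF_finite[of "UNIV :: 'd set", OF finite] by blast
  have "\<forall>i. \<exists>N. \<forall>n. n i \<ge> N \<longrightarrow> Q i n"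
    using Q by (simp add: eventually_filtercomap_at_top_linorder)
  then obtain Nf where Nf: "\<And>i n. n i \<ge> Nf i \<Longrightarrow> Q i n" by metis
  show ?thesis
  proof (intro exI allI impI)
    fix n :: "'d \<Rightarrow> nat" assume "\<forall>i. Max (range Nf) \<le> n i"
    have "\<forall>i. Q i n"
    proof
      fix i
      have "Nf i \<le> Max (range Nf)" by (rule Max_ge) auto
      then show "Q i n" using Nf \<open>\<forall>i. Max (range Nf) \<le> n i\<close> le_trans by blast
    qed
    then show "P n" using QP by auto
  qed
qed

lemma limsup_bound:
  assumes "Limsup F (f :: _ \<Rightarrow> ereal) < \<infinity>"
  shows "\<exists>B::real. eventually (\<lambda>x. f x < B) F"
proof -
  obtain B :: real where "Limsup F f < ereal B"
  proof (cases "Limsup F f")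
    case (real r)
    then show ?thesis using that[of "r+1"] by simp
  next
    case PInf
    then show ?thesis using assms by simp
  next
    case MInf
    then show ?thesis using that[of 0] by simp
  qed
  then show ?thesis using Limsup_lessD by blast
qed

lemma LL_le_Log: "Log (Log x) \<le> Log x"
proof -
  have "Log x \<le> max x (exp 1)" unfolding Log_def
    by (metis ln_less_self exp_gt_zero less_max_iff_disj less_imp_le)
  hence "Log (Log x) \<le> Log (max x (exp 1))" by (rule Log_mono)
  also have "\<dots> = Log x" unfolding Log_def by (simp add: max.assoc)
  finally show ?thesis .
qed

lemma LLx_over_x: "((\<lambda>x::real. Log (Log x) / x) \<longlongrightarrow> 0) at_top"
proof (rule real_tendsto_sandwich)
  show "((\<lambda>x::real. 0) \<longlongrightarrow> 0) at_top" by simp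
  show "((\<lambda>x::real. ln x / x) \<longlongrightarrow> 0) at_top" by (rule ln_x_over_x_tendsto_0)
  show "eventually (\<lambda>x. 0 \<le> Log (Log x) / x) at_top"
    using eventually_ge_at_top[of "1::real"] by eventually_elim (use Log_pos in \<open>auto intro: less_imp_le\<close>)
  show "eventually (\<lambda>x. Log (Log x) / x \<le> ln x / x) at_top"
    using eventually_ge_at_top[of "exp 1::real"]
  proof eventually_elim
    case (elim x)
    have "x > 0" using elim by (meson exp_gt_zero less_le_trans)
    have "Log (Log x) \<le> ln x" using LL_le_Log[of x] Log_eq[OF elim] by simp
    then show ?case using \<open>x > 0\<close> by (simp add: divide_right_mono)
  qed
qed

definition Dset :: "'d set \<Rightarrow> real \<Rightarrow> ('d::finite \<Rightarrow> nat) set" where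
  "Dset I K = {m. (\<forall>i. 1 \<le> m i) \<and> (\<forall>i. i \<notin> I \<longrightarrow> m i = 1) \<and> real (\<Prod>i\<in>I. m i) \<le> K}"

lemma prod_ge_factor:
  fixes m :: "'i \<Rightarrow> nat"
  assumes "finite I" "i \<in> I" "\<forall>j\<in>I. 1 \<le> m j"
  shows "m i \<le> (\<Prod>j\<in>I. m j)"
proof -
  have "(\<Prod>j\<in>I. m j) = m i * (\<Prod>j\<in>I-{i}. m j)" using assms by (simp add: prod.remove)
  moreover have "1 \<le> (\<Prod>j\<in>I-{i}. m j)" using assms by (intro prod_ge_1) auto
  ultimately show ?thesis by simp
qed

lemma finite_bounded_funs: "finite {m :: 'd::finite \<Rightarrow> nat. \<forall>i. m i \<le> B}"
  using finite_set_of_finite_funs[of "UNIV :: 'd set" "{..B}" 0] by simp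

lemma Dset_finite: "finite (Dset I K)"
proof (rule finite_subset[OF _ finite_bounded_funs[of "max 1 (nat \<lceil>K\<rceil>)"]])
  show "Dset I K \<subseteq> {m. \<forall>i. m i \<le> max 1 (nat \<lceil>K\<rceil>)}"
  proof safe
    fix m i assume m: "m \<in> Dset I K"
    show "m i \<le> max 1 (nat \<lceil>K\<rceil>)"
    proof (cases "i \<in> I")
      case True
      have "m i \<le> (\<Prod>j\<in>I. m j)" using m True by (intro prod_ge_factor) (auto simp: Dset_def)
      hence "real (m i) \<le> K" using m unfolding Dset_def by (smt (verit) mem_Collect_eq of_nat_le_iff)
      hence "m i \<le> nat \<lceil>K\<rceil>" by linarith
      then show ?thesis by simp
    next
      case False then show ?thesis using m by (simp add: Dset_def)
    qed
  qed
qed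

lemma Dset_empty: "K \<ge> 1 \<Longrightarrow> card (Dset {} K) = 1"
proof -
  assume "K \<ge> 1"
  then have eq: "Dset {} K = {\<lambda>_. 1}" by (auto simp: Dset_def)
  show ?thesis unfolding eq by (rule is_singleton_altdef[THEN iffD1]) simp
qed

lemma Dset_step:
  assumes "j \<notin> I" "finite I"
  shows "(\<Sum>t=1..T. card (Dset I (K / real t))) \<le> card (Dset (insert j I) K)"
proof -
  define A where "A t = (\<lambda>m. m(j:=t)) ` Dset I (K / real t)" for t
  have inj: "inj_on (\<lambda>m. m(j:=t)) (Dset I (K / real t))" for t
  proof (rule inj_onI)
    fix m m' assume "m \<in> Dset I (K / real t)" "m' \<in> Dset I (K / real t)" "m(j:=t) = m'(j:=t)"
    then show "m = m'" using assms(1) unfolding Dset_def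
      by (metis (mono_tags, lifting) fun_upd_idem mem_Collect_eq fun_upd_upd)
  qed
  have cardA: "card (A t) = card (Dset I (K / real t))" for t
    unfolding A_def by (rule card_image[OF inj])
  have disj: "\<forall>t\<in>{1..T}. \<forall>t'\<in>{1..T}. t \<noteq> t' \<longrightarrow> A t \<inter> A t' = {}"
    unfolding A_def by (auto dest: fun_cong[of _ _ j])
  have sub: "(\<Union>t\<in>{1..T}. A t) \<subseteq> Dset (insert j I) K"
  proof safe
    fix t m assume t: "t \<in> {1..T}" and m: "m \<in> A t"
    then obtain m0 where m0: "m0 \<in> Dset I (K / real t)" and mdef: "m = m0(j:=t)" unfolding A_def by auto
    have p: "(\<Prod>i\<in>I. m i) = (\<Prod>i\<in>I. m0 i)" unfolding mdef using assms(1)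
      by (intro prod.cong) auto
    have "(\<Prod>i\<in>insert j I. m i) = t * (\<Prod>i\<in>I. m0 i)"
      using assms p by (simp add: mdef)
    moreover have "real (\<Prod>i\<in>I. m0 i) \<le> K / real t" using m0 by (simp add: Dset_def)
    moreover have "real t \<ge> 1" using t by simp
    ultimately have "real (\<Prod>i\<in>insert j I. m i) \<le> K"
      by (simp add: field_simps mult.commute)
    moreover have "\<forall>i. 1 \<le> m i" using m0 t by (auto simp: Dset_def mdef)
    moreover have "\<forall>i. i \<notin> insert j I \<longrightarrow> m i = 1" using m0 by (auto simp: Dset_def mdef)
    ultimately show "m \<in> Dset (insert j I) K" by (simp add: Dset_def)
  qed
  have "(\<Sum>t=1..T. card (Dset I (K / real t))) = (\<Sum>t=1..T. card (A t))" by (simp add: cardA)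
  also have "\<dots> = card (\<Union>t\<in>{1..T}. A t)"
    by (rule card_UN_disjoint[symmetric]) (use disj in \<open>auto simp: A_def Dset_finite\<close>)
  also have "\<dots> \<le> card (Dset (insert j I) K)" by (rule card_mono[OF Dset_finite sub])
  finally show ?thesis .
qed

lemma floor_half: "K \<ge> 1 \<Longrightarrow> K / 2 \<le> real (nat \<lfloor>K\<rfloor>)"
proof -
  assume K: "K \<ge> 1"
  have a: "real_of_int \<lfloor>K\<rfloor> \<ge> 1" using K by simp
  have b: "real_of_int \<lfloor>K\<rfloor> > K - 1" by linarith
  have "real (nat \<lfloor>K\<rfloor>) = real_of_int \<lfloor>K\<rfloor>" using a by simp
  then show ?thesis using a b by linarith
qed

lemma Dset_single: "K \<ge> 1 \<Longrightarrow> K / 2 \<le> real (card (Dset {j::'d::finite} K))"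
proof -
  assume K: "K \<ge> 1"
  have "(\<Sum>t=1..nat \<lfloor>K\<rfloor>. card (Dset ({}::'d::finite set) (K / real t))) = (\<Sum>t=1..nat \<lfloor>K\<rfloor>. 1)"
  proof (rule sum.cong)
    fix t assume t: "t \<in> {1..nat \<lfloor>K\<rfloor>}"
    then have "real t \<le> K" by (simp add: le_nat_floor) linarith
    moreover have "real t \<ge> 1" using t by simp
    ultimately have "K / real t \<ge> 1" by simp
    then show "card (Dset ({}::'d set) (K / real t)) = 1" by (rule Dset_empty)
  qed simp
  also have "\<dots> = nat \<lfloor>K\<rfloor>" by simp
  finally have "nat \<lfloor>K\<rfloor> \<le> card (Dset {j} K)"
    using Dset_step[where j=j and I="{}::'d set" and T="nat \<lfloor>K\<rfloor>" and K=K] by simp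
  then show ?thesis using floor_half[OF K] by linarith
qed

lemma Dset_lower:
  assumes "I \<noteq> {}" "K \<ge> 1"
  shows "K * ln K ^ (card I - 1) / 2 ^ (card I * card I) \<le> real (card (Dset (I::'d::finite set) K))"
proof -
  have "finite I" by simp
  from this assms show ?thesis
  proof (induction I arbitrary: K rule: finite_ne_induct)
    case (singleton j)
    then show ?case using Dset_single[of K j] by simp
  next
    case (insert j I)
    define k where "k = card I"
    have k1: "k \<ge> 1" using insert.hyps k_def by (simp add: Suc_leI card_gt_0_iff)
    have cins: "card (insert j I) = k + 1" using insert.hyps k_def by simp
    have K1: "K \<ge> 1" using insert.prems by simp
    define T where "T = nat \<lfloor>sqrt K\<rfloor>"
    have sK: "sqrt K \<ge> 1" using K1 by simp
    have T1: "real T \<le> sqrt K" "sqrt K < real T + 1" unfolding T_def using sK by linarith+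
    have lnK: "ln K \<ge> 0" using K1 by simp
    have lnsK: "ln (sqrt K) = ln K / 2" using K1 by (simp add: ln_sqrt)
    let ?c = "K * (ln K / 2) ^ (k - 1) / 2 ^ (k * k)"
    have "(\<Sum>t=1..T. ?c * inverse (real t)) \<le> (\<Sum>t=1..T. real (card (Dset I (K / real t))))"
    proof (rule sum_mono)
      fix t assume t: "t \<in> {1..T}"
      have t1: "real t \<ge> 1" using t by simp
      have tle: "real t \<le> sqrt K" using t T1 by simp
      have Kt: "K / real t \<ge> sqrt K"
      proof -
        have "sqrt K * real t \<le> sqrt K * sqrt K" using tle sK by (intro mult_left_mono) auto
        also have "\<dots> = K" using K1 by simp
        finally show ?thesis using t1 by (simp add: field_simps)
      qed
      have Kt1: "K / real t \<ge> 1" using Kt sK by linarith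
      have lnKt: "ln (K / real t) \<ge> ln K / 2"
        using Kt sK lnsK by (metis ln_le_cancel_iff order_less_le_trans zero_less_one)
      have "?c * inverse (real t) = (K / real t) * (ln K / 2) ^ (k - 1) / 2 ^ (k * k)"
        by (simp add: field_simps)
      also have "\<dots> \<le> (K / real t) * ln (K / real t) ^ (k - 1) / 2 ^ (k * k)"
        using lnKt lnK Kt1 by (intro divide_right_mono mult_left_mono power_mono) auto
      also have "\<dots> \<le> real (card (Dset I (K / real t)))"
        using insert.IH[OF Kt1] k_def by simp
      finally show "?c * inverse (real t) \<le> real (card (Dset I (K / real t)))" .
    qed
    also have "\<dots> \<le> real (card (Dset (insert j I) K))"
      using Dset_step[OF insert.hyps(3), where T=T and K=K] by (simp flip: of_nat_sum)
    finally have A: "?c * harm T \<le> real (card (Dset (insert j I) K))"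
      by (simp add: harm_def sum_distrib_left)
    have "ln K / 2 = ln (sqrt K)" using lnsK by simp
    also have "\<dots> \<le> ln (real T + 1)" using T1 sK by (intro ln_mono) auto
    also have "\<dots> \<le> harm T" by (rule ln_le_harm)
    finally have H: "ln K / 2 \<le> harm T" .
    have c0: "?c \<ge> 0" using K1 lnK by simp
    have "K * ln K ^ (card (insert j I) - 1) / 2 ^ (card (insert j I) * card (insert j I))
          = K * ln K ^ k / 2 ^ ((k+1) * (k+1))" using cins by simp
    also have "\<dots> \<le> K * ln K ^ k / 2 ^ (k * k + k)"
      using K1 lnK by (intro divide_left_mono mult_nonneg_nonneg power_increasing) (auto simp: algebra_simps)
    also have "\<dots> = ?c * (ln K / 2)"
    proof -
      have "ln K ^ k = ln K ^ (k - 1) * ln K" using k1 by (metis Suc_diff_le diff_Suc_1 power_Suc2)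
      moreover have "(2::real) ^ k = 2 ^ (k - 1) * 2" using k1 by (metis Suc_diff_le diff_Suc_1 power_Suc2)
      ultimately show ?thesis by (simp add: power_add power_divide field_simps)
    qed
    also have "\<dots> \<le> ?c * harm T" by (rule mult_left_mono[OF H c0])
    also note A
    finally show ?case .
  qed
qed

lemma (in prob_space) int_ind: "A \<in> events \<Longrightarrow> integrable M (indicator A :: 'a \<Rightarrow> real)"
  by (rule integrable_real_indicator) (simp_all add: less_top[symmetric])

lemma (in prob_space) ER:
  assumes F: "finite F" and ev: "\<And>i. i \<in> F \<Longrightarrow> A i \<in> events"
    and pw: "\<And>i j. i \<in> F \<Longrightarrow> j \<in> F \<Longrightarrow> i \<noteq> j \<Longrightarrow> prob (A i \<inter> A j) \<le> prob (A i) * prob (A j)"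
  shows "(\<Sum>i\<in>F. prob (A i)) / (1 + (\<Sum>i\<in>F. prob (A i))) \<le> prob (\<Union>i\<in>F. A i)"
proof -
  define s where "s = (\<Sum>i\<in>F. prob (A i))"
  define t where "t = 1 + s"
  have s0: "s \<ge> 0" unfolding s_def by (simp add: sum_nonneg)
  have t0: "t > 0" unfolding t_def using s0 by simp
  define U where "U = (\<Union>i\<in>F. A i)"
  have U: "U \<in> events" unfolding U_def using ev F by auto
  define Z where "Z \<omega> = (\<Sum>i\<in>F. indicator (A i) \<omega> :: real)" for \<omega>
  define Z2 where "Z2 \<omega> = (\<Sum>i\<in>F. \<Sum>j\<in>F. indicator (A i \<inter> A j) \<omega> :: real)" for \<omega>
  have Z2eq: "Z2 \<omega> = (Z \<omega>)\<^sup>2" for \<omega>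
    unfolding Z2_def Z_def power2_eq_square sum_product by (simp add: indicator_inter_arith)
  have pt: "2 * Z \<omega> \<le> Z2 \<omega> / t + t * indicator U \<omega>" for \<omega>
  proof (cases "\<omega> \<in> U")
    case True
    have "0 \<le> (Z \<omega> - t)\<^sup>2" by simp
    then have "2 * Z \<omega> * t \<le> (Z \<omega>)\<^sup>2 + t * t" by (simp add: power2_eq_square algebra_simps)
    then show ?thesis using True t0 unfolding Z2eq by (simp add: field_simps)
  next
    case False
    then have "Z \<omega> = 0" unfolding Z_def U_def by (auto intro: sum.neutral)
    then show ?thesis using False Z2eq by simp
  qed
  have intI: "integrable M (indicator (A i) :: 'a \<Rightarrow> real)" if "i \<in> F" for i
    by (rule integrable_real_indicator[OF ev[OF that]]) (simp add: less_top[symmetric])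
  have intZ: "integrable M Z" unfolding Z_def
    using Bochner_Integration.integrable_sum[where I=F and M=M and f="\<lambda>i. indicator (A i) :: 'a \<Rightarrow> real", OF intI] by simp
  have intZ2: "integrable M Z2" unfolding Z2_def
    by (intro Bochner_Integration.integrable_sum integrable_real_indicator) (use ev in \<open>auto simp: less_top[symmetric]\<close>)
  have intU: "integrable M (indicator U :: 'a \<Rightarrow> real)" using U by (rule int_ind)
  have EZ: "(\<integral>\<omega>. Z \<omega> \<partial>M) = s" unfolding Z_def s_def
    by (subst Bochner_Integration.integral_sum) (use ev intI in \<open>auto simp: sets.Int_space_eq2\<close>)
  have ev2: "A i \<inter> A j \<in> events" if "i \<in> F" "j \<in> F" for i j using ev that by auto
  have EZ2: "(\<integral>\<omega>. Z2 \<omega> \<partial>M) = (\<Sum>i\<in>F. \<Sum>j\<in>F. prob (A i \<inter> A j))" unfolding Z2_def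
    apply (subst Bochner_Integration.integral_sum)
     apply (intro Bochner_Integration.integrable_sum int_ind ev2; assumption)
    apply (intro sum.cong refl)
    apply (subst Bochner_Integration.integral_sum)
     apply (intro int_ind ev2; assumption)
    apply (intro sum.cong refl)
    using ev2 by (simp add: sets.Int_space_eq2)
  have "(\<Sum>j\<in>F. prob (A i \<inter> A j)) \<le> prob (A i) + (\<Sum>j\<in>F. prob (A i) * prob (A j))" if i: "i \<in> F" for i
  proof -
    have "(\<Sum>j\<in>F. prob (A i \<inter> A j)) = prob (A i \<inter> A i) + (\<Sum>j\<in>F-{i}. prob (A i \<inter> A j))"
      using F i by (simp add: sum.remove)
    also have "\<dots> \<le> prob (A i) + (\<Sum>j\<in>F-{i}. prob (A i) * prob (A j))"
      using pw i by (intro add_mono sum_mono) auto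
    also have "\<dots> \<le> prob (A i) + (\<Sum>j\<in>F. prob (A i) * prob (A j))"
      using F i by (intro add_left_mono sum_mono2) auto
    finally show ?thesis .
  qed
  then have "(\<integral>\<omega>. Z2 \<omega> \<partial>M) \<le> (\<Sum>i\<in>F. prob (A i) + (\<Sum>j\<in>F. prob (A i) * prob (A j)))"
    unfolding EZ2 by (intro sum_mono) auto
  also have "\<dots> = s + s * s" unfolding s_def by (simp add: sum.distrib sum_product)
  finally have EZ2le: "(\<integral>\<omega>. Z2 \<omega> \<partial>M) \<le> s + s * s" .
  have "2 * s = (\<integral>\<omega>. 2 * Z \<omega> \<partial>M)" using EZ by simp
  also have "\<dots> \<le> (\<integral>\<omega>. Z2 \<omega> / t + t * indicator U \<omega> \<partial>M)"
    using pt intZ intZ2 intU by (intro integral_mono) auto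
  also have "\<dots> = (\<integral>\<omega>. Z2 \<omega> \<partial>M) / t + t * prob U"
    using intZ2 intU U by simp
  also have "\<dots> \<le> (s + s * s) / t + t * prob U"
    using EZ2le t0 by (simp add: divide_right_mono)
  also have "(s + s * s) / t = s" unfolding t_def using s0 by (simp add: field_simps)
  finally have "s \<le> t * prob U" by simp
  then show ?thesis using t0 unfolding s_def[symmetric] U_def[symmetric] t_def
    by (simp add: divide_le_eq mult.commute)
qed

lemma (in prob_space) ER_inf:
  assumes ev: "\<And>i. i \<in> R \<Longrightarrow> A i \<in> events" and Uev: "(\<Union>i\<in>R. A i) \<in> events"
    and pw: "\<And>i j. i \<in> R \<Longrightarrow> j \<in> R \<Longrightarrow> i \<noteq> j \<Longrightarrow> prob (A i \<inter> A j) \<le> prob (A i) * prob (A j)"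
    and unb: "\<And>B. \<exists>F. finite F \<and> F \<subseteq> R \<and> B < (\<Sum>i\<in>F. prob (A i))"
  shows "prob (\<Union>i\<in>R. A i) = 1"
proof (rule ccontr)
  define p where "p = prob (\<Union>i\<in>R. A i)"
  assume "prob (\<Union>i\<in>R. A i) \<noteq> 1"
  moreover have "p \<le> 1" unfolding p_def by (rule prob_le_1)
  ultimately have p1: "p < 1" unfolding p_def by linarith
  obtain F where F: "finite F" "F \<subseteq> R" "p / (1 - p) < (\<Sum>i\<in>F. prob (A i))"
    using unb by blast
  define s where "s = (\<Sum>i\<in>F. prob (A i))"
  have s0: "s \<ge> 0" unfolding s_def by (simp add: sum_nonneg)
  have "s / (1 + s) \<le> prob (\<Union>i\<in>F. A i)" unfolding s_def
  proof (rule ER)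
    show "finite F" by (rule F(1))
    show "A i \<in> events" if "i \<in> F" for i using F(2) that ev by blast
    show "prob (A i \<inter> A j) \<le> prob (A i) * prob (A j)" if "i \<in> F" "j \<in> F" "i \<noteq> j" for i j
      using F(2) that pw by blast
  qed
  also have "\<dots> \<le> p" unfolding p_def using F Uev by (intro finite_measure_mono) auto
  finally have "s \<le> p * (1 + s)" using s0 by (simp add: divide_le_eq)
  moreover have "p < s * (1 - p)" using F(3) p1 unfolding s_def by (simp add: field_simps)
  ultimately show False by (simp add: algebra_simps)
qed

locale NAF = prob_space M for M :: "'a measure" +
  fixes X :: "('d::finite \<Rightarrow> nat) \<Rightarrow> 'a \<Rightarrow> real"
  assumes rv: "\<And>n. n \<in> pos_idx \<Longrightarrow> X n \<in> borel_measurable M"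
    and NA: "neg_assoc M pos_idx X"
    and idd: "\<And>n m. n \<in> pos_idx \<Longrightarrow> m \<in> pos_idx \<Longrightarrow> distr M borel (X n) = distr M borel (X m)"
begin

lemma bnd_int:
  fixes f :: "'a \<Rightarrow> real" and C :: real
  assumes "f \<in> borel_measurable M" "\<And>x. \<bar>f x\<bar> \<le> C"
  shows "integrable M f"
  using assms by (intro integrable_const_bound[where B=C]) auto

lemma NA_pair:
  fixes \<phi> \<psi> :: "real \<Rightarrow> real" and C :: real
  assumes ij: "i \<in> pos_idx" "j \<in> pos_idx" "i \<noteq> j"
    and mono: "mono \<phi>" "mono \<psi>"
    and meas: "\<phi> \<in> borel_measurable borel" "\<psi> \<in> borel_measurable borel"
    and bnd: "\<And>x. \<bar>\<phi> x\<bar> \<le> C" "\<And>x. \<bar>\<psi> x\<bar> \<le> C"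
  shows "(\<integral>\<omega>. \<phi> (X i \<omega>) * \<psi> (X j \<omega>) \<partial>M) \<le> (\<integral>\<omega>. \<phi> (X i \<omega>) \<partial>M) * (\<integral>\<omega>. \<psi> (X j \<omega>) \<partial>M)"
proof -
  define f where "f = (\<lambda>x::('d \<Rightarrow> nat) \<Rightarrow> real. \<phi> (x i))"
  define g where "g = (\<lambda>x::('d \<Rightarrow> nat) \<Rightarrow> real. \<psi> (x j))"
  have fm: "f \<in> borel_measurable (PiM {i} (\<lambda>_. borel))" unfolding f_def
    using measurable_compose[OF measurable_component_singleton[of i "{i}" "\<lambda>_. borel"] meas(1)] by simp
  have gm: "g \<in> borel_measurable (PiM {j} (\<lambda>_. borel))" unfolding g_def
    using measurable_compose[OF measurable_component_singleton[of j "{j}" "\<lambda>_. borel"] meas(2)] by simp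
  have cf: "coord_mono {i} f" unfolding coord_mono_def f_def using mono(1) by (auto dest: monoD)
  have cg: "coord_mono {j} g" unfolding coord_mono_def g_def using mono(2) by (auto dest: monoD)
  have fr: "f (restrict (\<lambda>l. X l \<omega>) {i}) = \<phi> (X i \<omega>)" for \<omega> unfolding f_def by simp
  have gr: "g (restrict (\<lambda>l. X l \<omega>) {j}) = \<psi> (X j \<omega>)" for \<omega> unfolding g_def by simp
  have m1: "(\<lambda>\<omega>. \<phi> (X i \<omega>)) \<in> borel_measurable M" using rv[OF ij(1)] meas(1) by measurable
  have m2: "(\<lambda>\<omega>. \<psi> (X j \<omega>)) \<in> borel_measurable M" using rv[OF ij(2)] meas(2) by measurable
  have i1: "integrable M (\<lambda>\<omega>. \<phi> (X i \<omega>))" using m1 bnd(1) by (rule bnd_int)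
  have i2: "integrable M (\<lambda>\<omega>. \<psi> (X j \<omega>))" using m2 bnd(2) by (rule bnd_int)
  have i3: "integrable M (\<lambda>\<omega>. \<phi> (X i \<omega>) * \<psi> (X j \<omega>))"
  proof (rule bnd_int[where C="C*C"])
    show "(\<lambda>\<omega>. \<phi> (X i \<omega>) * \<psi> (X j \<omega>)) \<in> borel_measurable M" using m1 m2 by measurable
    fix \<omega> show "\<bar>\<phi> (X i \<omega>) * \<psi> (X j \<omega>)\<bar> \<le> C * C"
      unfolding abs_mult using bnd by (intro mult_mono) (auto intro: order_trans[OF abs_ge_zero])
  qed
  have H: "(\<integral>\<omega>. f (restrict (\<lambda>l. X l \<omega>) {i}) * g (restrict (\<lambda>l. X l \<omega>) {j}) \<partial>M)
         - (\<integral>\<omega>. f (restrict (\<lambda>l. X l \<omega>) {i}) \<partial>M) * (\<integral>\<omega>. g (restrict (\<lambda>l. X l \<omega>) {j}) \<partial>M) \<le> 0"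
    apply (rule NA[unfolded neg_assoc_def, rule_format])
    apply (intro conjI)
    apply (unfold fr gr)
    using ij fm gm cf cg i1 i2 i3 by auto
  then show ?thesis unfolding fr gr by simp
qed

lemma int_ind_comp: "(\<integral>\<omega>. (indicator S (X n \<omega>) :: real) \<partial>M) = prob {\<omega>\<in>space M. X n \<omega> \<in> S}"
proof -
  have "(\<integral>\<omega>. (indicator S (X n \<omega>) :: real) \<partial>M) = (\<integral>\<omega>. indicator {\<omega>\<in>space M. X n \<omega> \<in> S} \<omega> \<partial>M)"
    by (intro Bochner_Integration.integral_cong) (auto simp: indicator_def)
  also have "\<dots> = prob {\<omega>\<in>space M. X n \<omega> \<in> S}"
    by (simp add: Int_absorb2 subset_iff)
  finally show ?thesis .
qed

lemma int_ind_comp2: "(\<integral>\<omega>. (indicator S (X n \<omega>) :: real) * indicator T (X m \<omega>) \<partial>M)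
   = prob ({\<omega>\<in>space M. X n \<omega> \<in> S} \<inter> {\<omega>\<in>space M. X m \<omega> \<in> T})"
proof -
  have "(\<integral>\<omega>. (indicator S (X n \<omega>) :: real) * indicator T (X m \<omega>) \<partial>M)
     = (\<integral>\<omega>. indicator ({\<omega>\<in>space M. X n \<omega> \<in> S} \<inter> {\<omega>\<in>space M. X m \<omega> \<in> T}) \<omega> \<partial>M)"
    by (intro Bochner_Integration.integral_cong) (auto simp: indicator_def)
  also have "\<dots> = prob ({\<omega>\<in>space M. X n \<omega> \<in> S} \<inter> {\<omega>\<in>space M. X m \<omega> \<in> T})"
    by (simp add: Int_absorb2 subset_iff)
  finally show ?thesis .
qed

lemma NA_up:
  assumes "n \<in> pos_idx" "m \<in> pos_idx" "n \<noteq> m"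
  shows "prob ({\<omega>\<in>space M. X n \<omega> \<in> {s<..}} \<inter> {\<omega>\<in>space M. X m \<omega> \<in> {t<..}})
    \<le> prob {\<omega>\<in>space M. X n \<omega> \<in> {s<..}} * prob {\<omega>\<in>space M. X m \<omega> \<in> {t<..}}"
proof -
  have mo: "mono (indicator {u<..} :: real \<Rightarrow> real)" for u
    unfolding mono_def indicator_def by auto
  have "(\<integral>\<omega>. (indicator {s<..} (X n \<omega>) :: real) * indicator {t<..} (X m \<omega>) \<partial>M)
     \<le> (\<integral>\<omega>. indicator {s<..} (X n \<omega>) \<partial>M) * (\<integral>\<omega>. indicator {t<..} (X m \<omega>) \<partial>M)"
    by (rule NA_pair[where i=n and j=m and \<phi>="indicator {s<..}" and \<psi>="indicator {t<..}" and C=1, OF assms mo mo]) auto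
  then show ?thesis unfolding int_ind_comp int_ind_comp2 .
qed

lemma NA_down:
  assumes "n \<in> pos_idx" "m \<in> pos_idx" "n \<noteq> m"
  shows "prob ({\<omega>\<in>space M. X n \<omega> \<in> {..<s}} \<inter> {\<omega>\<in>space M. X m \<omega> \<in> {..<t}})
    \<le> prob {\<omega>\<in>space M. X n \<omega> \<in> {..<s}} * prob {\<omega>\<in>space M. X m \<omega> \<in> {..<t}}"
proof -
  have mo: "mono (\<lambda>x. - indicator {..<u} x :: real)" for u :: real
    unfolding mono_def indicator_def by auto
  have "(\<integral>\<omega>. (- indicator {..<s} (X n \<omega>) :: real) * (- indicator {..<t} (X m \<omega>)) \<partial>M)
     \<le> (\<integral>\<omega>. - indicator {..<s} (X n \<omega>) \<partial>M) * (\<integral>\<omega>. - indicator {..<t} (X m \<omega>) \<partial>M)"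
    by (rule NA_pair[where i=n and j=m and \<phi>="\<lambda>x. - indicator {..<s} x" and \<psi>="\<lambda>x. - indicator {..<t} x" and C=1, OF assms mo mo]) auto
  then show ?thesis by (simp add: int_ind_comp int_ind_comp2)
qed

end

definition bn :: "nat \<Rightarrow> nat \<Rightarrow> real" where
  "bn d k = sqrt (2 * real d * real k * Log (Log (real k)))"

definition sub :: "('d \<Rightarrow> nat) \<Rightarrow> 'd set \<Rightarrow> ('d \<Rightarrow> nat)" where
  "sub n E = (\<lambda>i. if i \<in> E then n i - 1 else n i)"

definition boxn :: "('d \<Rightarrow> nat) \<Rightarrow> ('d \<Rightarrow> nat) set" where
  "boxn n = {k. \<forall>i. 1 \<le> k i \<and> k i \<le> n i}"

lemma ps_box: "partial_sum n X \<omega> = (\<Sum>k\<in>boxn n. X k \<omega>)"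
  unfolding partial_sum_def boxn_def ..

lemma finite_box: "finite (boxn (n :: 'd::finite \<Rightarrow> nat))"
  by (rule finite_subset[OF _ finite_bounded_funs[of "Max (range n)"]])
     (auto simp: boxn_def intro: order_trans[OF _ Max_ge])

lemma alt_sum: "finite F \<Longrightarrow> (\<Sum>E\<in>Pow F. (-1::real) ^ card E) = (if F = {} then 1 else 0)"
  using prod_diff_conv_sum[of F "\<lambda>_. 1::real" "\<lambda>_. 1"] by (auto simp: power_0_left card_eq_0_iff)

lemma incl_excl:
  fixes n :: "'d::finite \<Rightarrow> nat"
  assumes n: "\<forall>i. 1 \<le> n i"
  shows "X n \<omega> = (\<Sum>E\<in>Pow UNIV. (-1::real) ^ card E * partial_sum (sub n E) X \<omega>)"
proof -
  have ps: "partial_sum (sub n E) X \<omega> = (\<Sum>k\<in>boxn n. if E \<subseteq> {i. k i < n i} then X k \<omega> else 0)" for E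
  proof -
    have "boxn (sub n E) = {k\<in>boxn n. E \<subseteq> {i. k i < n i}}"
      using n unfolding boxn_def sub_def by (auto split: if_splits)
    then show ?thesis unfolding ps_box by (simp add: sum.inter_filter finite_box)
  qed
  have inner: "(\<Sum>E\<in>Pow UNIV. (-1::real) ^ card E * (if E \<subseteq> F then c else 0)) = (if F = {} then c else 0)" for F :: "'d set" and c
  proof -
    have "(\<Sum>E\<in>Pow UNIV. (-1::real) ^ card E * (if E \<subseteq> F then c else 0))
        = (\<Sum>E\<in>{E\<in>Pow UNIV. E \<subseteq> F}. (-1::real) ^ card E * c)"
      by (subst sum.inter_filter) (auto intro: sum.cong)
    also have "{E\<in>Pow UNIV. E \<subseteq> F} = Pow F" by auto
    also have "(\<Sum>E\<in>Pow F. (-1::real) ^ card E * c) = (\<Sum>E\<in>Pow F. (-1::real) ^ card E) * c"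
      by (simp add: sum_distrib_right)
    also have "\<dots> = (if F = {} then c else 0)" by (simp add: alt_sum)
    finally show ?thesis .
  qed
  have "(\<Sum>E\<in>Pow UNIV. (-1::real) ^ card E * partial_sum (sub n E) X \<omega>)
      = (\<Sum>E\<in>Pow UNIV. \<Sum>k\<in>boxn n. (-1::real) ^ card E * (if E \<subseteq> {i. k i < n i} then X k \<omega> else 0))"
    unfolding ps by (simp add: sum_distrib_left)
  also have "\<dots> = (\<Sum>k\<in>boxn n. \<Sum>E\<in>Pow UNIV. (-1::real) ^ card E * (if E \<subseteq> {i. k i < n i} then X k \<omega> else 0))"
    by (rule sum.swap)
  also have "\<dots> = (\<Sum>k\<in>boxn n. if {i. k i < n i} = {} then X k \<omega> else 0)"
    by (simp only: inner)
  also have "\<dots> = (\<Sum>k\<in>{n}. X k \<omega>)"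
  proof -
    have "{k \<in> boxn n. {i. k i < n i} = {}} = {n}"
      using n by (auto simp: boxn_def intro!: ext) (meson le_antisym not_le)
    then show ?thesis by (simp add: sum.inter_filter[symmetric] finite_box)
  qed
  finally show ?thesis by simp
qed

lemma bn_mono: "k \<le> k' \<Longrightarrow> bn d k \<le> bn d k'"
  unfolding bn_def
  by (intro real_sqrt_le_mono mult_mono Log_mono) (auto intro: less_imp_le[OF Log_pos])

lemma bn_pos: "d \<ge> 1 \<Longrightarrow> k \<ge> 1 \<Longrightarrow> bn d k > 0"
  unfolding bn_def using Log_pos[of "Log (real k)"] by simp

lemma idx_size_pos: "\<forall>i. 1 \<le> n i \<Longrightarrow> idx_size n \<ge> 1"
  unfolding idx_size_def by (intro prod_ge_1) auto

lemma idx_size_sub_le: "idx_size (sub n E) \<le> idx_size n"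
  unfolding idx_size_def sub_def by (intro prod_mono) auto

lemma bound_from_limsup:
  fixes X :: "('d::finite \<Rightarrow> nat) \<Rightarrow> 'a \<Rightarrow> real"
  assumes "Limsup mi_at_top (\<lambda>n. ereal (\<bar>partial_sum n X \<omega>\<bar> / bn CARD('d) (idx_size n))) < \<infinity>"
  shows "\<exists>B N. \<forall>n. (\<forall>i. N \<le> n i) \<longrightarrow> \<bar>X n \<omega>\<bar> \<le> B * bn CARD('d) (idx_size n)"
proof -
  obtain B0 :: real where ev: "eventually (\<lambda>n. ereal (\<bar>partial_sum n X \<omega>\<bar> / bn CARD('d) (idx_size n)) < B0) mi_at_top"
    using limsup_bound[OF assms] by blast
  obtain N0 where N0': "\<forall>n. (\<forall>i. N0 \<le> n i) \<longrightarrow> ereal (\<bar>partial_sum n X \<omega>\<bar> / bn CARD('d) (idx_size n)) < ereal B0"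
    using ev_mi_at_top[OF ev] by blast
  have N0: "\<bar>partial_sum n X \<omega>\<bar> / bn CARD('d) (idx_size n) < B0" if "\<forall>i. N0 \<le> n i" for n
    using N0' that by simp
  have d1: "CARD('d) \<ge> 1" by (simp add: Suc_leI)
  show ?thesis
  proof (intro exI allI impI)
    fix n :: "'d \<Rightarrow> nat" assume n: "\<forall>i. N0 + 2 \<le> n i"
    have n1: "\<forall>i. 1 \<le> n i" using n by (metis add_leE le_add2 order_trans one_le_numeral)
    have bsub: "\<bar>partial_sum (sub n E) X \<omega>\<bar> \<le> B0 * bn CARD('d) (idx_size n)" for E
    proof -
      have s1: "\<forall>i. N0 \<le> sub n E i"
      proof
        fix i show "N0 \<le> sub n E i" using n[rule_format, of i] unfolding sub_def by auto
      qed
      have s2: "\<forall>i. 1 \<le> sub n E i"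
      proof
        fix i show "1 \<le> sub n E i" using n[rule_format, of i] unfolding sub_def by auto
      qed
      have bp: "bn CARD('d) (idx_size (sub n E)) > 0" using bn_pos[OF d1 idx_size_pos[OF s2]] .
      have "\<bar>partial_sum (sub n E) X \<omega>\<bar> / bn CARD('d) (idx_size (sub n E)) < B0" using N0[OF s1] .
      hence lt: "\<bar>partial_sum (sub n E) X \<omega>\<bar> < B0 * bn CARD('d) (idx_size (sub n E))"
        using bp by (simp add: divide_less_eq)
      hence "B0 > 0" using bp by (smt (verit) mult_nonpos_nonneg)
      moreover have "bn CARD('d) (idx_size (sub n E)) \<le> bn CARD('d) (idx_size n)"
        by (rule bn_mono[OF idx_size_sub_le])
      ultimately show ?thesis using lt by (smt (verit) mult_left_mono)
    qed
    have "\<bar>X n \<omega>\<bar> = \<bar>\<Sum>E\<in>Pow UNIV. (-1::real) ^ card E * partial_sum (sub n E) X \<omega>\<bar>"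
      using incl_excl[OF n1] by metis
    also have "\<dots> \<le> (\<Sum>E\<in>Pow (UNIV::'d set). \<bar>(-1::real) ^ card E * partial_sum (sub n E) X \<omega>\<bar>)"
      by (rule sum_abs)
    also have "\<dots> = (\<Sum>E\<in>Pow (UNIV::'d set). \<bar>partial_sum (sub n E) X \<omega>\<bar>)"
      by (simp add: abs_mult power_abs)
    also have "\<dots> \<le> (\<Sum>E\<in>Pow (UNIV::'d set). B0 * bn CARD('d) (idx_size n))"
      by (rule sum_mono) (rule bsub)
    also have "\<dots> = (2 ^ CARD('d) * B0) * bn CARD('d) (idx_size n)"
      by (simp add: card_Pow)
    finally show "\<bar>X n \<omega>\<bar> \<le> (2 ^ CARD('d) * B0) * bn CARD('d) (idx_size n)" .
  qed
qed

lemma asym: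
  fixes L A :: real assumes L: "L > 0"
  shows "eventually (\<lambda>y::real. exp (exp 1) \<le> y \<and> A \<le> ln (ln y) \<and> L * ln (ln y) \<le> y) at_top"
proof -
  have e1: "eventually (\<lambda>y::real. exp (exp 1) \<le> y) at_top" by (rule eventually_ge_at_top)
  have "filterlim (\<lambda>y::real. ln (ln y)) at_top at_top"
    by (rule filterlim_compose[OF ln_at_top ln_at_top])
  then have e2: "eventually (\<lambda>y. A \<le> ln (ln y)) at_top" by (simp add: filterlim_at_top)
  have "eventually (\<lambda>y::real. Log (Log y) / y < 1 / L) at_top"
    using order_tendstoD(2)[OF LLx_over_x] L by simp
  then have e3: "eventually (\<lambda>y::real. L * ln (ln y) \<le> y) at_top"
    using e1
  proof eventually_elim
    case (elim y)
    have y0: "y > 0" using elim(2) by (smt (verit) exp_gt_zero)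
    have "ln (ln y) / y < 1 / L" using elim LL_eq by simp
    then have "ln (ln y) < y / L" using y0 by (simp add: divide_less_eq field_simps)
    then show ?case using L by (simp add: field_simps)
  qed
  show ?thesis using e1 e2 e3 by eventually_elim auto
qed

lemma Cnt_finite:
  fixes c :: real
  assumes c: "c > 0" and N: "N \<ge> 1"
  shows "finite {n :: 'd::finite \<Rightarrow> nat. (\<forall>i. N \<le> n i) \<and> c * bn CARD('d) (idx_size n) < y}"
proof (rule finite_subset[OF _ finite_bounded_funs[of "nat \<lceil>(y/c)\<^sup>2\<rceil>"]], safe)
  fix n :: "'d \<Rightarrow> nat" and i
  assume n: "\<forall>i. N \<le> n i" and lt: "c * bn CARD('d) (idx_size n) < y"
  have n1: "\<forall>i. 1 \<le> n i" using n N order_trans by blast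
  define k where "k = idx_size n"
  have k1: "k \<ge> 1" unfolding k_def by (rule idx_size_pos[OF n1])
  have d1: "real CARD('d) \<ge> 1" by (simp add: Suc_leI)
  have "real k \<le> 2 * real CARD('d) * real k * Log (Log (real k))"
  proof -
    have "1 * 1 \<le> (2 * real CARD('d)) * Log (Log (real k))"
    proof (rule mult_mono)
      show "1 \<le> 2 * real CARD('d)" using d1 by linarith
    qed (use Log_ge_1[of "Log (real k)"] in auto)
    then have h: "real k * 1 \<le> real k * (2 * real CARD('d) * Log (Log (real k)))"
      by (intro mult_left_mono) auto
    then show ?thesis by (simp add: ac_simps)
  qed
  then have "sqrt (real k) \<le> bn CARD('d) k" unfolding bn_def by (rule real_sqrt_le_mono)
  then have "c * sqrt (real k) < y" using lt c unfolding k_def by (smt (verit) mult_left_mono)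
  then have "sqrt (real k) < y / c" using c by (simp add: field_simps)
  then have "(sqrt (real k))\<^sup>2 < (y / c)\<^sup>2"
    by (intro power_strict_mono) auto
  then have "real k < (y / c)\<^sup>2" by simp
  moreover have "n i \<le> k" unfolding k_def idx_size_def using n1 by (intro prod_ge_factor) auto
  ultimately show "n i \<le> nat \<lceil>(y / c)\<^sup>2\<rceil>" by linarith
qed

lemma Cnt_scale:
  fixes c :: real
  assumes N: "N \<ge> 1" and c: "c > 0"
    and hk: "\<forall>k::nat. 1 \<le> k \<longrightarrow> real k \<le> K \<longrightarrow> c * bn CARD('d) (N ^ CARD('d) * k) < y"
  shows "card (Dset (UNIV :: 'd::finite set) K) \<le> card {n :: 'd \<Rightarrow> nat. (\<forall>i. N \<le> n i) \<and> c * bn CARD('d) (idx_size n) < y}"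
proof -
  let ?f = "\<lambda>m::'d \<Rightarrow> nat. (\<lambda>i. N * m i)"
  have inj: "inj_on ?f (Dset UNIV K)"
    using N by (auto intro!: inj_onI ext dest: fun_cong)
  have "?f ` Dset UNIV K \<subseteq> {n :: 'd \<Rightarrow> nat. (\<forall>i. N \<le> n i) \<and> c * bn CARD('d) (idx_size n) < y}"
  proof safe
    fix m :: "'d \<Rightarrow> nat" and i assume m: "m \<in> Dset UNIV K"
    then have m1: "\<forall>i. 1 \<le> m i" and mK: "real (idx_size m) \<le> K" by (auto simp: Dset_def idx_size_def)
    show "N \<le> N * m i" using m1 by simp
    have "idx_size (?f m) = N ^ CARD('d) * idx_size m"
      unfolding idx_size_def by (simp add: prod.distrib)
    moreover have "1 \<le> idx_size m" by (rule idx_size_pos[OF m1])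
    ultimately show "c * bn CARD('d) (idx_size (?f m)) < y" using hk mK by simp
  qed
  then have "card (?f ` Dset UNIV K) \<le> card {n :: 'd \<Rightarrow> nat. (\<forall>i. N \<le> n i) \<and> c * bn CARD('d) (idx_size n) < y}"
    by (rule card_mono[OF Cnt_finite[OF c N]])
  then show ?thesis using card_image[OF inj] by simp
qed

lemma count_lower:
  fixes c :: real and N :: nat
  assumes c: "c > 0" and N: "N \<ge> 1"
  shows "\<exists>C0 C1. \<forall>y\<ge>0. y\<^sup>2 * Log y ^ (CARD('d) - 1) / Log (Log y)
     \<le> C0 + C1 * real (card {n :: 'd::finite \<Rightarrow> nat. (\<forall>i. N \<le> n i) \<and> c * bn CARD('d) (idx_size n) < y})"
proof -
  define d where "d = CARD('d)"
  have d1: "d \<ge> 1" unfolding d_def by (simp add: Suc_leI)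
  have dr: "real d \<ge> 1" using d1 by simp
  define Q where "Q = real N ^ d"
  have Q1: "Q \<ge> 1" unfolding Q_def using N by simp
  define L where "L = 4 * real d * c\<^sup>2 * Q"
  have L0: "L > 0" unfolding L_def using dr Q1 c by simp
  define Cnt where "Cnt y = card {n :: 'd \<Rightarrow> nat. (\<forall>i. N \<le> n i) \<and> c * bn CARD('d) (idx_size n) < y}" for y
  obtain Y0 where Y0: "\<And>y. y \<ge> Y0 \<Longrightarrow> exp (exp 1) \<le> y \<and> 1 / (4 * real d * c\<^sup>2) \<le> ln (ln y) \<and> L * ln (ln y) \<le> y"
    using asym[OF L0, of "1 / (4 * real d * c\<^sup>2)"] unfolding eventually_at_top_linorder by blast
  define Y1 where "Y1 = max Y0 (exp (exp 1))"
  define C0 where "C0 = Y1\<^sup>2 * Log Y1 ^ (d - 1)"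
  define C1 where "C1 = L * 2 ^ (d * d)"
  have C1: "C1 \<ge> 0" unfolding C1_def using L0 by simp
  have C0: "C0 \<ge> 0" unfolding C0_def using Log_pos[of Y1] by simp
  have main: "y\<^sup>2 * Log y ^ (d - 1) / Log (Log y) \<le> C0 + C1 * real (Cnt y)" if y0: "y \<ge> 0" for y
  proof (cases "y \<le> Y1")
    case True
    have num0: "0 \<le> y\<^sup>2 * Log y ^ (d - 1)" using Log_pos[of y] by simp
    have "y\<^sup>2 * Log y ^ (d - 1) / Log (Log y) \<le> y\<^sup>2 * Log y ^ (d - 1) / 1"
      by (rule divide_left_mono) (use Log_ge_1[of "Log y"] num0 in auto)
    then have "y\<^sup>2 * Log y ^ (d - 1) / Log (Log y) \<le> y\<^sup>2 * Log y ^ (d - 1)" by simp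
    also have "\<dots> \<le> Y1\<^sup>2 * Log Y1 ^ (d - 1)"
      using True y0 Log_pos[of y] by (intro mult_mono power_mono Log_mono) auto
    also have "\<dots> \<le> C0 + C1 * real (Cnt y)" unfolding C0_def using C1 by simp
    finally show ?thesis .
  next
    case False
    then have yY: "y \<ge> Y0" "y \<ge> exp (exp 1)" unfolding Y1_def by auto
    note P = Y0[OF yY(1)]
    have ee: "exp (exp 1) \<ge> (1::real)" by simp
    have y1: "y \<ge> 1" using yY(2) ee by linarith
    have "exp 1 \<le> exp (exp (1::real))" by simp
    then have ye: "y \<ge> exp 1" using yY(2) by linarith
    have "ln (exp (exp 1)) \<le> ln y" by (rule ln_mono[OF yY(2)]) simp
    then have lny: "ln y \<ge> exp 1" by simp
    have lny0: "ln y > 0" using lny exp_gt_zero[of 1] by linarith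
    have "ln (exp 1) \<le> ln (ln y)" by (rule ln_mono[OF lny]) simp
    then have llny: "ln (ln y) \<ge> 1" by simp
    define K where "K = y\<^sup>2 / (L * ln (ln y))"
    have Ky: "K \<ge> y"
    proof -
      have "y * (L * ln (ln y)) \<le> y * y" using P y0 by (intro mult_left_mono) auto
      then show ?thesis unfolding K_def using L0 llny by (simp add: le_divide_eq power2_eq_square)
    qed
    have K1: "K \<ge> 1" using Ky y1 by linarith
    have hk: "\<forall>k::nat. 1 \<le> k \<longrightarrow> real k \<le> K \<longrightarrow> c * bn CARD('d) (N ^ CARD('d) * k) < y"
    proof (intro allI impI)
      fix k :: nat assume k1: "1 \<le> k" and kK: "real k \<le> K"
      define x where "x = real (N ^ CARD('d) * k)"
      have xQ: "x = Q * real k" unfolding x_def Q_def d_def by simp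
      have D1: "4 * real d * c\<^sup>2 * ln (ln y) \<ge> 1" using P c dr by (simp add: field_simps)
      have QK: "Q * K = y\<^sup>2 / (4 * real d * c\<^sup>2 * ln (ln y))"
        unfolding K_def L_def using Q1 by (simp add: field_simps)
      have xle: "x \<le> Q * K" unfolding xQ using kK Q1 by (intro mult_left_mono) auto
      have QKy: "Q * K \<le> y\<^sup>2" unfolding QK
      proof -
        have "y\<^sup>2 / (4 * real d * c\<^sup>2 * ln (ln y)) \<le> y\<^sup>2 / 1"
        proof (rule divide_left_mono[OF D1])
          have "0 < 4 * real d * c\<^sup>2 * ln (ln y)" using D1 by linarith
          then show "0 < 4 * real d * c\<^sup>2 * ln (ln y) * 1" by (simp only: mult_1_right)
        qed simp
        then show "y\<^sup>2 / (4 * real d * c\<^sup>2 * ln (ln y)) \<le> y\<^sup>2" by simp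
      qed
      have x0: "x \<ge> 0" unfolding x_def by simp
      have y2: "y\<^sup>2 \<ge> exp (exp 1)" 
      proof -
        have "y * 1 \<le> y * y" using y1 by (intro mult_left_mono) auto
        then show ?thesis using yY(2) by (simp add: power2_eq_square)
      qed
      have lny2: "ln (ln (y\<^sup>2)) = ln 2 + ln (ln y)"
        using y1 lny0 by (simp add: ln_realpow ln_mult)
      have LLx: "Log (Log x) \<le> ln 2 + ln (ln y)"
      proof -
        have "Log (Log x) \<le> Log (Log (y\<^sup>2))" using xle QKy by (intro Log_mono) auto
        also have "\<dots> = ln 2 + ln (ln y)" using LL_eq[OF y2] lny2 by simp
        finally show ?thesis .
      qed
      have "2 * real d * x * Log (Log x) \<le> 2 * real d * (Q * K) * (ln 2 + ln (ln y))"
        using xle x0 LLx dr Log_pos[of "Log x"] Q1 K1 by (intro mult_mono) auto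
      also have "c\<^sup>2 * (2 * real d * (Q * K) * (ln 2 + ln (ln y))) = y\<^sup>2 * (ln 2 + ln (ln y)) / (2 * ln (ln y))"
        unfolding QK using dr c llny by (simp add: field_simps)
      finally have A: "c\<^sup>2 * (2 * real d * x * Log (Log x)) \<le> y\<^sup>2 * (ln 2 + ln (ln y)) / (2 * ln (ln y))"
        using c by (simp add: mult_left_mono)
      have "y\<^sup>2 * (ln 2 + ln (ln y)) / (2 * ln (ln y)) < y\<^sup>2"
      proof -
        have "ln 2 + ln (ln y) < 2 * ln (ln y)" using ln_2_less_1 llny by linarith
        then have "y\<^sup>2 * (ln 2 + ln (ln y)) < y\<^sup>2 * (2 * ln (ln y))" using y1 by simp
        then show ?thesis using llny by (simp add: divide_less_eq)
      qed
      with A have B: "c\<^sup>2 * (2 * real d * x * Log (Log x)) < y\<^sup>2" by linarith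
      have "c * bn CARD('d) (N ^ CARD('d) * k) = sqrt (c\<^sup>2 * (2 * real d * x * Log (Log x)))"
        unfolding bn_def x_def d_def using c by (simp add: real_sqrt_mult)
      also have "\<dots> < sqrt (y\<^sup>2)" using B by (rule real_sqrt_less_mono)
      also have "\<dots> = y" using y0 by simp
      finally show "c * bn CARD('d) (N ^ CARD('d) * k) < y" .
    qed
    have cardD: "card (Dset (UNIV :: 'd set) K) \<le> Cnt y"
      unfolding Cnt_def by (rule Cnt_scale[OF N c hk])
    have DL: "K * ln K ^ (d - 1) / 2 ^ (d * d) \<le> real (card (Dset (UNIV :: 'd set) K))"
      using Dset_lower[of "UNIV :: 'd set" K] K1 unfolding d_def by simp
    have lnK: "ln y \<le> ln K" using Ky y1 by simp
    have "y\<^sup>2 * Log y ^ (d - 1) / Log (Log y) = L * K * ln y ^ (d - 1)"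
      unfolding K_def using Log_eq[OF ye] LL_eq[OF yY(2)] L0 llny
      by (simp add: field_simps)
    also have "\<dots> \<le> L * K * ln K ^ (d - 1)"
      using L0 K1 lnK lny0 by (intro mult_left_mono power_mono) auto
    also have "\<dots> = C1 * (K * ln K ^ (d - 1) / 2 ^ (d * d))" unfolding C1_def by simp
    also have "\<dots> \<le> C1 * real (Cnt y)"
      using DL cardD C1 by (intro mult_left_mono) (auto intro: order_trans)
    also have "\<dots> \<le> C0 + C1 * real (Cnt y)" using C0 by simp
    finally show ?thesis .
  qed
  show ?thesis
  proof (intro exI allI impI)
    fix y :: real assume "0 \<le> y"
    from main[OF this] show "y\<^sup>2 * Log y ^ (CARD('d) - 1) / Log (Log y)
     \<le> C0 + C1 * real (card {n :: 'd::finite \<Rightarrow> nat. (\<forall>i. N \<le> n i) \<and> c * bn CARD('d) (idx_size n) < y})"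
      unfolding Cnt_def d_def .
  qed
qed

lemma bn_nonneg: "bn d k \<ge> 0"
  unfolding bn_def using Log_pos[of "Log (real k)"] by simp

lemma abs_set_eq: "{y::real. t < \<bar>y\<bar>} = {t<..} \<union> {..< -t}"
  by auto

lemma abs_set_borel: "{y::real. t < \<bar>y\<bar>} \<in> sets borel"
  unfolding abs_set_eq by simp

lemma Cnt_size:
  fixes c :: real and n :: "'d::finite \<Rightarrow> nat"
  assumes c: "c > 0" and N: "N \<ge> 1" and n: "\<forall>i. N \<le> n i"
    and lt: "c * bn CARD('d) (idx_size n) < y"
  shows "real (idx_size n) < (y / c)\<^sup>2"
proof -
  have n1: "\<forall>i. 1 \<le> n i" using n N order_trans by blast
  define k where "k = idx_size n"
  have k1: "k \<ge> 1" unfolding k_def by (rule idx_size_pos[OF n1])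
  have d1: "real CARD('d) \<ge> 1" by (simp add: Suc_leI)
  have "real k \<le> 2 * real CARD('d) * real k * Log (Log (real k))"
  proof -
    have "1 * 1 \<le> (2 * real CARD('d)) * Log (Log (real k))"
    proof (rule mult_mono)
      show "1 \<le> 2 * real CARD('d)" using d1 by linarith
    qed (use Log_ge_1[of "Log (real k)"] in auto)
    then have h: "real k * 1 \<le> real k * (2 * real CARD('d) * Log (Log (real k)))"
      by (intro mult_left_mono) auto
    then show ?thesis by (simp add: ac_simps)
  qed
  then have "sqrt (real k) \<le> bn CARD('d) k" unfolding bn_def by (rule real_sqrt_le_mono)
  then have "c * sqrt (real k) < y" using lt c unfolding k_def by (smt (verit) mult_left_mono)
  then have "sqrt (real k) < y / c" using c by (simp add: field_simps)
  then have "(sqrt (real k))\<^sup>2 < (y / c)\<^sup>2"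
    by (intro power_strict_mono) auto
  then show ?thesis unfolding k_def by simp
qed

context NAF
begin

lemma ones_pos: "(\<lambda>_. 1) \<in> pos_idx"
  by (simp add: pos_idx_def)

lemma ev_X: "n \<in> pos_idx \<Longrightarrow> S \<in> sets borel \<Longrightarrow> {\<omega>\<in>space M. X n \<omega> \<in> S} \<in> events"
  using measurable_sets[OF rv, of n S] by (simp add: vimage_def Int_def conj_commute)

lemma same_dist:
  assumes n: "n \<in> pos_idx" and m: "m \<in> pos_idx" and S: "S \<in> sets borel"
  shows "prob {\<omega>\<in>space M. X n \<omega> \<in> S} = prob {\<omega>\<in>space M. X m \<omega> \<in> S}"
proof -
  have eq: "X k -` S \<inter> space M = {\<omega>\<in>space M. X k \<omega> \<in> S}" for k by auto
  have "prob {\<omega>\<in>space M. X n \<omega> \<in> S} = measure (distr M borel (X n)) S"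
    using measure_distr[OF rv[OF n] S] eq by simp
  also have "\<dots> = measure (distr M borel (X m)) S" using idd[OF n m] by simp
  also have "\<dots> = prob {\<omega>\<in>space M. X m \<omega> \<in> S}"
    using measure_distr[OF rv[OF m] S] eq by simp
  finally show ?thesis .
qed

lemma prob_one:
  fixes c :: real and N :: nat
  assumes c: "c > 0" and N: "N \<ge> 1"
    and unb: "\<And>B. \<exists>F. finite F \<and> F \<subseteq> {n. \<forall>i. N \<le> n i} \<and>
       B < (\<Sum>n\<in>F. prob {\<omega>\<in>space M. X n \<omega> \<in> {y. c * bn CARD('d) (idx_size n) < \<bar>y\<bar>}})"
  shows "prob (\<Union>n\<in>{n. \<forall>i. N \<le> n i}. {\<omega>\<in>space M. X n \<omega> \<in> {y. c * bn CARD('d) (idx_size n) < \<bar>y\<bar>}}) = 1"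
proof -
  define R where "R = {n :: 'd \<Rightarrow> nat. \<forall>i. N \<le> n i}"
  define t where "t n = c * bn CARD('d) (idx_size n)" for n :: "'d \<Rightarrow> nat"
  define A where "A n = {\<omega>\<in>space M. X n \<omega> \<in> {y. t n < \<bar>y\<bar>}}" for n
  define Ap where "Ap n = {\<omega>\<in>space M. X n \<omega> \<in> {t n<..}}" for n
  define Am where "Am n = {\<omega>\<in>space M. X n \<omega> \<in> {..< - t n}}" for n
  have Rpos: "R \<subseteq> pos_idx" unfolding R_def pos_idx_def using N order_trans by blast
  have cR: "countable R" by simp
  have evA: "A n \<in> events" "Ap n \<in> events" "Am n \<in> events" if "n \<in> R" for n
  proof -
    have np: "n \<in> pos_idx" using Rpos that by blast
    show "A n \<in> events" unfolding A_def by (rule ev_X[OF np abs_set_borel])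
    show "Ap n \<in> events" unfolding Ap_def by (rule ev_X[OF np]) simp
    show "Am n \<in> events" unfolding Am_def by (rule ev_X[OF np]) simp
  qed
  have UA: "(\<Union>n\<in>R. A n) \<in> events" "(\<Union>n\<in>R. Ap n) \<in> events" "(\<Union>n\<in>R. Am n) \<in> events"
    using evA cR by (auto intro!: sets.countable_UN'')
  have split: "prob (A n) = prob (Ap n) + prob (Am n)" if "n \<in> R" for n
  proof -
    have "A n = Ap n \<union> Am n" unfolding A_def Ap_def Am_def by auto
    moreover have "t n \<ge> 0" unfolding t_def using c bn_nonneg by simp
    then have "Ap n \<inter> Am n = {}" unfolding Ap_def Am_def by auto
    ultimately show ?thesis using evA[OF that] by (simp add: measure_Union)
  qed
  have subp: "(\<Union>n\<in>R. Ap n) \<subseteq> (\<Union>n\<in>R. A n)" "(\<Union>n\<in>R. Am n) \<subseteq> (\<Union>n\<in>R. A n)"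
    unfolding A_def Ap_def Am_def by auto
  have one: "prob (\<Union>n\<in>R. A n) = 1" if sub: "(\<Union>n\<in>R. B n) \<subseteq> (\<Union>n\<in>R. A n)" and pB: "prob (\<Union>n\<in>R. B n) = 1" for B
  proof -
    have "prob (\<Union>n\<in>R. B n) \<le> prob (\<Union>n\<in>R. A n)" using sub UA by (intro finite_measure_mono) auto
    then show ?thesis using pB prob_le_1[of "\<Union>n\<in>R. A n"] by linarith
  qed
  show ?thesis
  proof (cases "\<forall>B. \<exists>F. finite F \<and> F \<subseteq> R \<and> B < (\<Sum>n\<in>F. prob (Ap n))")
    case True
    have "prob (\<Union>n\<in>R. Ap n) = 1"
    proof (rule ER_inf)
      show "Ap n \<in> events" if "n \<in> R" for n using evA that by blast
      show "(\<Union>n\<in>R. Ap n) \<in> events" using UA by blast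
      show "prob (Ap i \<inter> Ap j) \<le> prob (Ap i) * prob (Ap j)" if "i \<in> R" "j \<in> R" "i \<noteq> j" for i j
        unfolding Ap_def using NA_up[of i j] that Rpos by auto
      show "\<exists>F. finite F \<and> F \<subseteq> R \<and> B < (\<Sum>i\<in>F. prob (Ap i))" for B using True by blast
    qed
    then show ?thesis using one[OF subp(1)] unfolding R_def A_def t_def by simp
  next
    case False
    then obtain B1 where B1: "\<And>F. finite F \<Longrightarrow> F \<subseteq> R \<Longrightarrow> (\<Sum>n\<in>F. prob (Ap n)) \<le> B1"
      by (auto simp: not_less)
    have "prob (\<Union>n\<in>R. Am n) = 1"
    proof (rule ER_inf)
      show "Am n \<in> events" if "n \<in> R" for n using evA that by blast
      show "(\<Union>n\<in>R. Am n) \<in> events" using UA by blast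
      show "prob (Am i \<inter> Am j) \<le> prob (Am i) * prob (Am j)" if "i \<in> R" "j \<in> R" "i \<noteq> j" for i j
        unfolding Am_def using NA_down[of i j] that Rpos by auto
      fix B
      obtain F where F: "finite F" "F \<subseteq> R" "B + B1 < (\<Sum>n\<in>F. prob (A n))"
        using unb[of "B + B1"] unfolding R_def A_def t_def by blast
      have "(\<Sum>n\<in>F. prob (A n)) = (\<Sum>n\<in>F. prob (Ap n)) + (\<Sum>n\<in>F. prob (Am n))"
        using split F(2) by (simp add: sum.distrib[symmetric] subset_iff)
      then have "B < (\<Sum>n\<in>F. prob (Am n))" using B1[OF F(1,2)] F(3) by linarith
      then show "\<exists>F. finite F \<and> F \<subseteq> R \<and> B < (\<Sum>i\<in>F. prob (Am i))" using F by blast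
    qed
    then show ?thesis using one[OF subp(2)] unfolding R_def A_def t_def by simp
  qed
qed

lemma sums_unbounded:
  fixes c :: real and N :: nat
  assumes c: "c > 0" and N: "N \<ge> 1"
    and nint: "\<not> integrable M (\<lambda>\<omega>. (X (\<lambda>_. 1) \<omega>)\<^sup>2 * (Log \<bar>X (\<lambda>_. 1) \<omega>\<bar>) ^ (CARD('d) - 1)
                              / Log (Log \<bar>X (\<lambda>_. 1) \<omega>\<bar>))"
  shows "\<exists>F. finite F \<and> F \<subseteq> {n. \<forall>i. N \<le> n i} \<and>
       B < (\<Sum>n\<in>F. prob {\<omega>\<in>space M. X n \<omega> \<in> {y. c * bn CARD('d) (idx_size n) < \<bar>y\<bar>}})"
proof (rule ccontr)
  define R where "R = {n :: 'd \<Rightarrow> nat. \<forall>i. N \<le> n i}"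
  define t where "t n = c * bn CARD('d) (idx_size n)" for n :: "'d \<Rightarrow> nat"
  define S where "S n = {y::real. t n < \<bar>y\<bar>}" for n
  define Y where "Y = X (\<lambda>_. 1)"
  have Ym[measurable]: "Y \<in> borel_measurable M" unfolding Y_def by (rule rv[OF ones_pos])
  have Sb: "S n \<in> sets borel" for n unfolding S_def by (rule abs_set_borel)
  have Rpos: "R \<subseteq> pos_idx" unfolding R_def pos_idx_def using N order_trans by blast
  assume "\<not> ?thesis"
  then have bnd: "\<And>F. finite F \<Longrightarrow> F \<subseteq> R \<Longrightarrow> (\<Sum>n\<in>F. prob {\<omega>\<in>space M. X n \<omega> \<in> S n}) \<le> B"
    unfolding R_def S_def t_def by (auto simp: not_less)
  define Fk where "Fk K = {n\<in>R. idx_size n \<le> K}" for K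
  have Fkfin: "finite (Fk K)" for K
  proof (rule finite_subset[OF _ finite_bounded_funs[of K]])
    show "Fk K \<subseteq> {m :: 'd \<Rightarrow> nat. \<forall>i. m i \<le> K}"
    proof safe
      fix n i assume n: "n \<in> Fk K"
      then have "\<forall>j\<in>UNIV. 1 \<le> n j" using Rpos by (auto simp: Fk_def pos_idx_def)
      then have "n i \<le> idx_size n" unfolding idx_size_def by (intro prod_ge_factor) auto
      then show "n i \<le> K" using n by (simp add: Fk_def)
    qed
  qed
  define g where "g K \<omega> = (\<Sum>n\<in>Fk K. indicator (S n) (Y \<omega>) :: real)" for K \<omega>
  have gm[measurable]: "(\<lambda>\<omega>. g K \<omega>) \<in> borel_measurable M" for K
    unfolding g_def using Sb by measurable
  have indm: "(\<lambda>\<omega>. indicator (S n) (Y \<omega>) :: real) \<in> borel_measurable M" for n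
    using Sb by measurable
  have indi: "integrable M (\<lambda>\<omega>. indicator (S n) (Y \<omega>) :: real)" for n
    by (rule bnd_int[OF indm, where C=1]) (simp add: indicator_def)
  have gi: "integrable M (g K)" for K
    unfolding g_def by (rule Bochner_Integration.integrable_sum) (rule indi)
  have g0: "g K \<omega> \<ge> 0" for K \<omega> unfolding g_def by (simp add: sum_nonneg)
  have intg: "(\<integral>\<omega>. g K \<omega> \<partial>M) \<le> B" for K
  proof -
    have "(\<integral>\<omega>. g K \<omega> \<partial>M) = (\<Sum>n\<in>Fk K. \<integral>\<omega>. indicator (S n) (Y \<omega>) \<partial>M)"
      unfolding g_def by (rule Bochner_Integration.integral_sum) (rule indi)
    also have "\<dots> = (\<Sum>n\<in>Fk K. prob {\<omega>\<in>space M. X n \<omega> \<in> S n})"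
    proof (rule sum.cong[OF refl])
      fix n assume "n \<in> Fk K"
      then have np: "n \<in> pos_idx" using Rpos by (auto simp: Fk_def)
      show "(\<integral>\<omega>. indicator (S n) (Y \<omega>) \<partial>M) = prob {\<omega>\<in>space M. X n \<omega> \<in> S n}"
        unfolding Y_def int_ind_comp using same_dist[OF np ones_pos Sb] by simp
    qed
    also have "\<dots> \<le> B" using bnd[OF Fkfin] by (auto simp: Fk_def)
    finally show ?thesis .
  qed
  have nng: "(\<integral>\<^sup>+\<omega>. ennreal (g K \<omega>) \<partial>M) \<le> ennreal B" for K
    using nn_integral_eq_integral[OF gi, of K] g0 intg by (simp add: ennreal_leI)
  define Cnt where "Cnt y = card {n :: 'd \<Rightarrow> nat. (\<forall>i. N \<le> n i) \<and> c * bn CARD('d) (idx_size n) < y}" for y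
  have inc: "incseq (\<lambda>K \<omega>. ennreal (g K \<omega>))"
  proof (intro incseq_SucI le_funI)
    fix K \<omega>
    have "Fk K \<subseteq> Fk (Suc K)" unfolding Fk_def by auto
    then have "g K \<omega> \<le> g (Suc K) \<omega>" unfolding g_def using Fkfin by (intro sum_mono2) auto
    then show "ennreal (g K \<omega>) \<le> ennreal (g (Suc K) \<omega>)" by (rule ennreal_leI)
  qed
  have gcard: "g K \<omega> = real (card {n\<in>Fk K. t n < \<bar>Y \<omega>\<bar>})" for K \<omega>
    unfolding g_def S_def using Fkfin by (simp add: indicator_def sum.If_cases Int_def)
  have SUPeq: "(SUP K. ennreal (g K \<omega>)) = ennreal (real (Cnt \<bar>Y \<omega>\<bar>))" for \<omega>
  proof (rule antisym)
    have "g K \<omega> \<le> real (Cnt \<bar>Y \<omega>\<bar>)" for K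
    proof -
      have "{n\<in>Fk K. t n < \<bar>Y \<omega>\<bar>} \<subseteq> {n :: 'd \<Rightarrow> nat. (\<forall>i. N \<le> n i) \<and> c * bn CARD('d) (idx_size n) < \<bar>Y \<omega>\<bar>}"
        unfolding Fk_def R_def t_def by auto
      then show ?thesis unfolding gcard Cnt_def by (simp add: card_mono[OF Cnt_finite[OF c N]])
    qed
    then show "(SUP K. ennreal (g K \<omega>)) \<le> ennreal (real (Cnt \<bar>Y \<omega>\<bar>))"
      by (intro SUP_least ennreal_leI)
    define K0 where "K0 = nat \<lceil>(\<bar>Y \<omega>\<bar> / c)\<^sup>2\<rceil>"
    have "{n :: 'd \<Rightarrow> nat. (\<forall>i. N \<le> n i) \<and> c * bn CARD('d) (idx_size n) < \<bar>Y \<omega>\<bar>} \<subseteq> {n\<in>Fk K0. t n < \<bar>Y \<omega>\<bar>}"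
    proof safe
      fix n :: "'d \<Rightarrow> nat" assume n: "\<forall>i. N \<le> n i" and lt: "c * bn CARD('d) (idx_size n) < \<bar>Y \<omega>\<bar>"
      have "real (idx_size n) < (\<bar>Y \<omega>\<bar> / c)\<^sup>2" by (rule Cnt_size[OF c N n lt])
      then have "idx_size n \<le> K0" unfolding K0_def by linarith
      then show "n \<in> Fk K0" using n unfolding Fk_def R_def by simp
      show "t n < \<bar>Y \<omega>\<bar>" using lt unfolding t_def .
    qed
    then have "real (Cnt \<bar>Y \<omega>\<bar>) \<le> g K0 \<omega>"
      unfolding gcard Cnt_def using Fkfin by (simp add: card_mono)
    then have "ennreal (real (Cnt \<bar>Y \<omega>\<bar>)) \<le> ennreal (g K0 \<omega>)" by (rule ennreal_leI)
    also have "\<dots> \<le> (SUP K. ennreal (g K \<omega>))" by (rule SUP_upper) simp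
    finally show "ennreal (real (Cnt \<bar>Y \<omega>\<bar>)) \<le> (SUP K. ennreal (g K \<omega>))" .
  qed
  have intSUP: "(\<integral>\<^sup>+\<omega>. (SUP K. ennreal (g K \<omega>)) \<partial>M) \<le> ennreal B"
    using nng by (simp add: nn_integral_monotone_convergence_SUP[OF inc] SUP_least)
  obtain C0 C1 where CC: "\<And>y. y \<ge> 0 \<Longrightarrow> y\<^sup>2 * Log y ^ (CARD('d) - 1) / Log (Log y) \<le> C0 + C1 * real (Cnt y)"
    using count_lower[OF c N] unfolding Cnt_def by blast
  define C0' where "C0' = max C0 0"
  define C1' where "C1' = max C1 0"
  define Psi where "Psi \<omega> = (Y \<omega>)\<^sup>2 * (Log \<bar>Y \<omega>\<bar>) ^ (CARD('d) - 1) / Log (Log \<bar>Y \<omega>\<bar>)" for \<omega>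
  have Psi0: "Psi \<omega> \<ge> 0" for \<omega> unfolding Psi_def using Log_pos[of "\<bar>Y \<omega>\<bar>"] Log_pos[of "Log \<bar>Y \<omega>\<bar>"] by simp
  have Psim: "Psi \<in> borel_measurable M" unfolding Psi_def Log_def by measurable
  have Psib: "ennreal (norm (Psi \<omega>)) \<le> ennreal C0' + ennreal C1' * (SUP K. ennreal (g K \<omega>))" for \<omega>
  proof -
    have "Psi \<omega> = \<bar>Y \<omega>\<bar>\<^sup>2 * Log \<bar>Y \<omega>\<bar> ^ (CARD('d) - 1) / Log (Log \<bar>Y \<omega>\<bar>)"
      unfolding Psi_def by simp
    also have "\<dots> \<le> C0 + C1 * real (Cnt \<bar>Y \<omega>\<bar>)" by (rule CC) simp
    also have "\<dots> \<le> C0' + C1' * real (Cnt \<bar>Y \<omega>\<bar>)" unfolding C0'_def C1'_def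
      by (intro add_mono mult_right_mono) auto
    finally have "ennreal (norm (Psi \<omega>)) \<le> ennreal (C0' + C1' * real (Cnt \<bar>Y \<omega>\<bar>))"
      using Psi0 by (intro ennreal_leI) simp
    also have "\<dots> = ennreal C0' + ennreal C1' * ennreal (real (Cnt \<bar>Y \<omega>\<bar>))"
      unfolding C0'_def C1'_def by (simp add: ennreal_plus ennreal_mult)
    finally show ?thesis unfolding SUPeq .
  qed
  have "(\<integral>\<^sup>+\<omega>. ennreal (norm (Psi \<omega>)) \<partial>M) \<le> (\<integral>\<^sup>+\<omega>. ennreal C0' + ennreal C1' * (SUP K. ennreal (g K \<omega>)) \<partial>M)"
    by (intro nn_integral_mono Psib)
  also have "\<dots> = ennreal C0' + ennreal C1' * (\<integral>\<^sup>+\<omega>. (SUP K. ennreal (g K \<omega>)) \<partial>M)"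
    by (subst nn_integral_add) (auto simp: nn_integral_cmult emeasure_space_1)
  also have "\<dots> \<le> ennreal C0' + ennreal C1' * ennreal B"
    using intSUP by (intro add_left_mono mult_left_mono) auto
  also have "\<dots> < \<infinity>" by (simp add: ennreal_mult_less_top)
  finally have "integrable M Psi" by (intro integrableI_bounded Psim)
  then show False using nint unfolding Psi_def Y_def by simp
qed

lemma moment:
  assumes LIL: "prob {\<omega> \<in> space M. Limsup mi_at_top (\<lambda>n. ereal (\<bar>partial_sum n X \<omega>\<bar> / bn CARD('d) (idx_size n))) < \<infinity>} > 0"
  shows "integrable M (\<lambda>\<omega>. (X (\<lambda>_. 1) \<omega>)\<^sup>2 * (Log \<bar>X (\<lambda>_. 1) \<omega>\<bar>) ^ (CARD('d) - 1)
                              / Log (Log \<bar>X (\<lambda>_. 1) \<omega>\<bar>))"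
proof (rule ccontr)
  assume nint: "\<not> ?thesis"
  define E0 where "E0 = {\<omega> \<in> space M. Limsup mi_at_top (\<lambda>n. ereal (\<bar>partial_sum n X \<omega>\<bar> / bn CARD('d) (idx_size n))) < \<infinity>}"
  define A where "A m N = (\<Union>n\<in>{n. \<forall>i. N \<le> n i}. {\<omega>\<in>space M. X n \<omega> \<in> {y. real (Suc m) * bn CARD('d) (idx_size n) < \<bar>y\<bar>}})" for m N :: nat
  have pA: "prob (A m (Suc N)) = 1" for m N
  proof -
    have c: "real (Suc m) > 0" by simp
    have N: "Suc N \<ge> 1" by simp
    show ?thesis unfolding A_def
      by (rule prob_one[OF c N]) (rule sums_unbounded[OF c N nint])
  qed
  have "AE \<omega> in M. \<forall>m N. \<omega> \<in> A m (Suc N)"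
    unfolding AE_all_countable by (intro allI AE_prob_1 pA)
  moreover have "\<omega> \<notin> E0" if "\<forall>m N. \<omega> \<in> A m (Suc N)" for \<omega>
  proof
    assume "\<omega> \<in> E0"
    then obtain B N0 where BN: "\<And>n. \<forall>i. N0 \<le> n i \<Longrightarrow> \<bar>X n \<omega>\<bar> \<le> B * bn CARD('d) (idx_size n)"
      unfolding E0_def using bound_from_limsup[of X \<omega>] by blast
    define m where "m = nat \<lceil>B\<rceil>"
    have mB: "B < real (Suc m)" unfolding m_def by linarith
    from that have "\<omega> \<in> A m (Suc N0)" by blast
    then obtain n where n: "\<forall>i. Suc N0 \<le> n i" and lt: "real (Suc m) * bn CARD('d) (idx_size n) < \<bar>X n \<omega>\<bar>"
      unfolding A_def by auto
    have "\<forall>i. N0 \<le> n i" using n Suc_leD by blast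
    then have "\<bar>X n \<omega>\<bar> \<le> B * bn CARD('d) (idx_size n)" by (rule BN)
    also have "\<dots> \<le> real (Suc m) * bn CARD('d) (idx_size n)"
      using mB bn_nonneg by (intro mult_right_mono) auto
    finally show False using lt by linarith
  qed
  ultimately have AE0: "AE \<omega> in M. \<omega> \<notin> E0" by (auto elim: AE_mp)
  have E0s: "E0 \<in> events" using LIL unfolding E0_def[symmetric] by (metis measure_notin_sets less_irrefl)
  have "emeasure M E0 = 0"
    using AE_iff_measurable[OF E0s, of "\<lambda>\<omega>. \<omega> \<notin> E0"] AE0 unfolding E0_def by auto
  then have "prob E0 = 0" by (simp add: measure_def)
  then show False using LIL unfolding E0_def by simp
qed

end

definition clmp :: "real \<Rightarrow> real \<Rightarrow> real" where
  "clmp t x = max (- t) (min t x)"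

lemma clmp_mono: "mono (clmp t)"
  unfolding clmp_def mono_def by auto

lemma clmp_bound: "t \<ge> 0 \<Longrightarrow> \<bar>clmp t x\<bar> \<le> t"
  unfolding clmp_def by auto

lemma clmp_meas[measurable]: "clmp t \<in> borel_measurable borel"
  unfolding clmp_def by measurable

lemma clmp_diff: "t \<ge> 0 \<Longrightarrow> \<bar>x - clmp t x\<bar> \<le> \<bar>x\<bar>"
  unfolding clmp_def by auto

lemma clmp_id: "\<bar>x\<bar> \<le> t \<Longrightarrow> clmp t x = x"
  unfolding clmp_def by auto

lemma aux_div: "(z::real) > 0 \<Longrightarrow> 2 * a * z * b / z\<^sup>2 = 2 * a * (b / z)"
  by (simp add: power2_eq_square field_simps)

lemma bn_diag_lim:
  assumes d: "d \<ge> 1"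
  shows "(\<lambda>k::nat. bn d (k ^ d) / real (k ^ d)) \<longlonglongrightarrow> 0"
proof -
  have f: "filterlim (\<lambda>k::nat. real k ^ d) at_top sequentially"
    using d by (intro filterlim_pow_at_top filterlim_real_sequentially) auto
  have "(\<lambda>k::nat. Log (Log (real k ^ d)) / (real k ^ d)) \<longlonglongrightarrow> 0"
    by (rule filterlim_compose[OF LLx_over_x f])
  then have "(\<lambda>k::nat. sqrt (2 * real d * (Log (Log (real k ^ d)) / (real k ^ d)))) \<longlonglongrightarrow> sqrt (2 * real d * 0)"
    by (intro tendsto_intros)
  then have lim: "(\<lambda>k::nat. sqrt (2 * real d * (Log (Log (real k ^ d)) / (real k ^ d)))) \<longlonglongrightarrow> 0" by simp
  have "eventually (\<lambda>k. sqrt (2 * real d * (Log (Log (real k ^ d)) / (real k ^ d))) = bn d (k ^ d) / real (k ^ d)) sequentially"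
    using eventually_ge_at_top[of "1::nat"]
  proof eventually_elim
    case (elim k)
    have kp: "real k ^ d > 0" using elim by simp
    have "bn d (k ^ d) / real (k ^ d) = sqrt (2 * real d * real k ^ d * Log (Log (real k ^ d))) / sqrt ((real k ^ d)\<^sup>2)"
      unfolding bn_def of_nat_power using real_sqrt_abs[of "real k ^ d"] kp by auto
    also have "\<dots> = sqrt (2 * real d * real k ^ d * Log (Log (real k ^ d)) / (real k ^ d)\<^sup>2)"
      by (simp add: real_sqrt_divide)
    also have "\<dots> = sqrt (2 * real d * (Log (Log (real k ^ d)) / (real k ^ d)))"
      using aux_div[OF kp] by simp
    finally show ?case by simp
  qed
  then show ?thesis using lim by (rule Lim_transform_eventually[rotated])
qed

context NAF
begin

lemma int_same:
  assumes n: "n \<in> pos_idx" and g: "g \<in> borel_measurable borel"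
  shows "(\<integral>\<omega>. g (X n \<omega>) \<partial>M) = (\<integral>\<omega>. (g (X (\<lambda>_. 1) \<omega>) :: real) \<partial>M)"
proof -
  have "(\<integral>\<omega>. g (X n \<omega>) \<partial>M) = integral\<^sup>L (distr M borel (X n)) g"
    by (rule integral_distr[OF rv[OF n] g, symmetric])
  also have "\<dots> = integral\<^sup>L (distr M borel (X (\<lambda>_. 1))) g" using idd[OF n ones_pos] by simp
  also have "\<dots> = (\<integral>\<omega>. g (X (\<lambda>_. 1) \<omega>) \<partial>M)"
    by (rule integral_distr[OF rv[OF ones_pos] g])
  finally show ?thesis .
qed

lemma Y_int:
  assumes "integrable M (\<lambda>\<omega>. (X (\<lambda>_. 1) \<omega>)\<^sup>2 * (Log \<bar>X (\<lambda>_. 1) \<omega>\<bar>) ^ (CARD('d) - 1)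
                              / Log (Log \<bar>X (\<lambda>_. 1) \<omega>\<bar>))" (is "integrable M ?P")
  shows "integrable M (X (\<lambda>_. 1))"
proof (rule Bochner_Integration.integrable_bound)
  show "integrable M (\<lambda>\<omega>. exp 1 + ?P \<omega>)" using assms by simp
  show "X (\<lambda>_. 1) \<in> borel_measurable M" by (rule rv[OF ones_pos])
  show "AE \<omega> in M. norm (X (\<lambda>_. 1) \<omega>) \<le> norm (exp 1 + ?P \<omega>)"
  proof (rule AE_I2)
    fix \<omega>
    define a where "a = \<bar>X (\<lambda>_. 1) \<omega>\<bar>"
    have P0: "?P \<omega> \<ge> 0" using Log_pos[of "\<bar>X (\<lambda>_. 1) \<omega>\<bar>"] Log_pos[of "Log \<bar>X (\<lambda>_. 1) \<omega>\<bar>"] by simp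
    have "a \<le> exp 1 + ?P \<omega>"
    proof (cases "a \<le> exp 1")
      case True then show ?thesis using P0 by linarith
    next
      case False
      then have ae: "a \<ge> exp 1" by simp
      have a0: "a > 0" using ae exp_gt_zero[of 1] by linarith
      have LLa: "Log (Log a) \<le> a"
        using LL_le_Log[of a] Log_eq[OF ae] ln_less_self[OF a0] by linarith
      have LLp: "Log (Log a) > 0" by (rule Log_pos)
      have "a = a\<^sup>2 / a" using a0 by (simp add: power2_eq_square)
      also have "\<dots> \<le> a\<^sup>2 / Log (Log a)" using LLa LLp by (intro divide_left_mono) auto
      also have "\<dots> \<le> a\<^sup>2 * Log a ^ (CARD('d) - 1) / Log (Log a)"
      proof (rule divide_right_mono)
        have "1 \<le> Log a ^ (CARD('d) - 1)" by (rule one_le_power[OF Log_ge_1])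
        then have "a\<^sup>2 * 1 \<le> a\<^sup>2 * Log a ^ (CARD('d) - 1)" by (intro mult_left_mono) simp_all
        then show "a\<^sup>2 \<le> a\<^sup>2 * Log a ^ (CARD('d) - 1)" by simp
      qed (use LLp in simp)
      also have "\<dots> = ?P \<omega>" unfolding a_def by simp
      finally show ?thesis using exp_gt_zero[of 1] by linarith
    qed
    then show "norm (X (\<lambda>_. 1) \<omega>) \<le> norm (exp 1 + ?P \<omega>)"
      using P0 exp_gt_zero[of 1] unfolding a_def by simp
  qed
qed

lemma box_pos: "boxn n \<subseteq> pos_idx"
  unfolding boxn_def pos_idx_def by auto

lemma S_meas[measurable]: "(\<lambda>\<omega>. partial_sum n X \<omega>) \<in> borel_measurable M"
  unfolding ps_box using box_pos rv by (intro borel_measurable_sum) auto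

lemma int_same_integrable:
  assumes n: "n \<in> pos_idx" and g: "g \<in> borel_measurable borel"
  shows "integrable M (\<lambda>\<omega>. (g (X n \<omega>) :: real)) \<longleftrightarrow> integrable M (\<lambda>\<omega>. g (X (\<lambda>_. 1) \<omega>))"
proof -
  have "integrable M (\<lambda>\<omega>. g (X n \<omega>)) \<longleftrightarrow> integrable (distr M borel (X n)) g"
    by (rule integrable_distr_eq[OF rv[OF n] g, symmetric])
  also have "\<dots> \<longleftrightarrow> integrable (distr M borel (X (\<lambda>_. 1))) g" using idd[OF n ones_pos] by simp
  also have "\<dots> \<longleftrightarrow> integrable M (\<lambda>\<omega>. g (X (\<lambda>_. 1) \<omega>))"
    by (rule integrable_distr_eq[OF rv[OF ones_pos] g])
  finally show ?thesis .
qed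

lemma var_bound:
  fixes t :: real
  assumes t: "t \<ge> 0" and B: "finite B" "B \<subseteq> pos_idx"
  defines "m \<equiv> (\<integral>\<omega>. clmp t (X (\<lambda>_. 1) \<omega>) \<partial>M)"
  shows "(\<integral>\<omega>. (\<Sum>n\<in>B. clmp t (X n \<omega>) - m)\<^sup>2 \<partial>M) \<le> real (card B) * (2 * t)\<^sup>2"
proof -
  define a where "a n \<omega> = clmp t (X n \<omega>) - m" for n \<omega>
  have mb: "\<bar>m\<bar> \<le> t"
  proof -
    have "\<bar>m\<bar> \<le> (\<integral>\<omega>. norm (clmp t (X (\<lambda>_. 1) \<omega>)) \<partial>M)"
      unfolding m_def using integral_norm_bound[of M "\<lambda>\<omega>. clmp t (X (\<lambda>_. 1) \<omega>)"] by simp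
    also have "\<dots> \<le> (\<integral>\<omega>. t \<partial>M)"
    proof (rule integral_mono)
      show "integrable M (\<lambda>\<omega>. norm (clmp t (X (\<lambda>_. 1) \<omega>)))"
        using measurable_compose[OF rv[OF ones_pos] clmp_meas] clmp_bound[OF t] t
        by (intro bnd_int[where C=t]) auto
    qed (use clmp_bound[OF t] in auto)
    finally show ?thesis by (simp add: prob_space)
  qed
  have ab: "\<bar>a n \<omega>\<bar> \<le> 2 * t" for n \<omega> unfolding a_def using clmp_bound[OF t, of "X n \<omega>"] mb by linarith
  have am: "a n \<in> borel_measurable M" if "n \<in> pos_idx" for n
    unfolding a_def using measurable_compose[OF rv[OF that] clmp_meas] by measurable
  have aam: "(\<lambda>\<omega>. a n \<omega> * a l \<omega>) \<in> borel_measurable M" if "n \<in> pos_idx" "l \<in> pos_idx" for n l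
    using am[OF that(1)] am[OF that(2)] by measurable
  have aai: "integrable M (\<lambda>\<omega>. a n \<omega> * a l \<omega>)" if "n \<in> pos_idx" "l \<in> pos_idx" for n l
  proof (rule bnd_int[OF aam[OF that], where C="2*t*(2*t)"])
    fix \<omega> show "\<bar>a n \<omega> * a l \<omega>\<bar> \<le> 2 * t * (2 * t)"
      unfolding abs_mult using ab t by (intro mult_mono) auto
  qed
  have ci: "integrable M (\<lambda>\<omega>. clmp t (X n \<omega>))" if "n \<in> pos_idx" for n
    using measurable_compose[OF rv[OF that] clmp_meas] clmp_bound[OF t] by (intro bnd_int[where C=t]) auto
  have cm: "(\<integral>\<omega>. clmp t (X n \<omega>) \<partial>M) = m" if "n \<in> pos_idx" for n
    unfolding m_def by (rule int_same[OF that clmp_meas])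
  have off: "(\<integral>\<omega>. a n \<omega> * a l \<omega> \<partial>M) \<le> 0" if "n \<in> pos_idx" "l \<in> pos_idx" "n \<noteq> l" for n l
  proof -
    have na: "(\<integral>\<omega>. clmp t (X n \<omega>) * clmp t (X l \<omega>) \<partial>M)
        \<le> (\<integral>\<omega>. clmp t (X n \<omega>) \<partial>M) * (\<integral>\<omega>. clmp t (X l \<omega>) \<partial>M)"
      by (rule NA_pair[OF that clmp_mono clmp_mono clmp_meas clmp_meas clmp_bound[OF t] clmp_bound[OF t]])
    have cci: "integrable M (\<lambda>\<omega>. clmp t (X n \<omega>) * clmp t (X l \<omega>))"
    proof (rule bnd_int[where C="t*t"])
      show "(\<lambda>\<omega>. clmp t (X n \<omega>) * clmp t (X l \<omega>)) \<in> borel_measurable M"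
        using measurable_compose[OF rv[OF that(1)] clmp_meas] measurable_compose[OF rv[OF that(2)] clmp_meas]
        by measurable
      fix \<omega> show "\<bar>clmp t (X n \<omega>) * clmp t (X l \<omega>)\<bar> \<le> t * t"
        unfolding abs_mult using clmp_bound[OF t] t by (intro mult_mono) auto
    qed
    have "(\<integral>\<omega>. a n \<omega> * a l \<omega> \<partial>M) = (\<integral>\<omega>. clmp t (X n \<omega>) * clmp t (X l \<omega>) - m * clmp t (X l \<omega>) - m * clmp t (X n \<omega>) + m * m \<partial>M)"
      unfolding a_def by (simp add: algebra_simps)
    also have "\<dots> = (\<integral>\<omega>. clmp t (X n \<omega>) * clmp t (X l \<omega>) \<partial>M) - m * m - m * m + m * m"
      using cci ci[OF that(1)] ci[OF that(2)] cm[OF that(1)] cm[OF that(2)] by (simp add: prob_space)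
    also have "\<dots> \<le> 0" using na cm[OF that(1)] cm[OF that(2)] by simp
    finally show ?thesis .
  qed
  have "(\<integral>\<omega>. (\<Sum>n\<in>B. a n \<omega>)\<^sup>2 \<partial>M) = (\<integral>\<omega>. (\<Sum>n\<in>B. \<Sum>l\<in>B. a n \<omega> * a l \<omega>) \<partial>M)"
    by (simp add: power2_eq_square sum_product)
  also have "\<dots> = (\<Sum>n\<in>B. \<Sum>l\<in>B. (\<integral>\<omega>. a n \<omega> * a l \<omega> \<partial>M))"
    using B aai
    by (simp add: Bochner_Integration.integral_sum Bochner_Integration.integrable_sum subset_iff)
  also have "\<dots> \<le> (\<Sum>n\<in>B. (2 * t)\<^sup>2)"
  proof (rule sum_mono)
    fix n assume n: "n \<in> B"
    have "(\<Sum>l\<in>B. (\<integral>\<omega>. a n \<omega> * a l \<omega> \<partial>M)) = (\<integral>\<omega>. a n \<omega> * a n \<omega> \<partial>M) + (\<Sum>l\<in>B-{n}. (\<integral>\<omega>. a n \<omega> * a l \<omega> \<partial>M))"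
      using B n by (simp add: sum.remove)
    also have "\<dots> \<le> (\<integral>\<omega>. (2 * t)\<^sup>2 \<partial>M) + 0"
    proof (rule add_mono)
      show "(\<integral>\<omega>. a n \<omega> * a n \<omega> \<partial>M) \<le> (\<integral>\<omega>. (2 * t)\<^sup>2 \<partial>M)"
      proof (rule integral_mono)
        show "integrable M (\<lambda>\<omega>. a n \<omega> * a n \<omega>)" using aai n B by blast
        fix \<omega> show "a n \<omega> * a n \<omega> \<le> (2 * t)\<^sup>2"
        proof -
          have "\<bar>a n \<omega>\<bar> * \<bar>a n \<omega>\<bar> \<le> (2 * t) * (2 * t)"
            by (rule mult_mono) (use ab[of n \<omega>] in auto)
          then show ?thesis by (simp add: power2_eq_square)
        qed
      qed simp
      show "(\<Sum>l\<in>B-{n}. (\<integral>\<omega>. a n \<omega> * a l \<omega> \<partial>M)) \<le> 0"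
        using off n B by (intro sum_nonpos) auto
    qed
    finally show "(\<Sum>l\<in>B. (\<integral>\<omega>. a n \<omega> * a l \<omega> \<partial>M)) \<le> (2 * t)\<^sup>2" by (simp add: prob_space)
  qed
  also have "\<dots> = real (card B) * (2 * t)\<^sup>2" by simp
  finally show ?thesis unfolding a_def .
qed

end

lemma abs4: "\<bar>a - b - c + e\<bar> \<le> \<bar>a\<bar> + \<bar>b\<bar> + \<bar>c\<bar> + \<bar>(e::real)\<bar>"
  by arith

lemma idx_size_diag: "idx_size (\<lambda>_::'d::finite. k) = k ^ CARD('d)"
  unfolding idx_size_def by simp

lemma card_box_diag: "card (boxn (\<lambda>_::'d::finite. k)) = k ^ CARD('d)"
proof -
  have "boxn (\<lambda>_::'d. k) = PiE UNIV (\<lambda>_. {1..k})"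
    by (auto simp: boxn_def PiE_UNIV_domain)
  then show ?thesis by (simp add: card_PiE)
qed

context NAF
begin

lemma mean_zero:
  assumes LIL: "prob {\<omega> \<in> space M. Limsup mi_at_top (\<lambda>n. ereal (\<bar>partial_sum n X \<omega>\<bar> / bn CARD('d) (idx_size n))) < \<infinity>} > 0"
    and Yi: "integrable M (X (\<lambda>_. 1))"
  shows "(\<integral>\<omega>. X (\<lambda>_. 1) \<omega> \<partial>M) = 0"
proof (rule ccontr)
  define Y where "Y = X (\<lambda>_. 1)"
  define d where "d = CARD('d)"
  have d1: "d \<ge> 1" unfolding d_def by (simp add: Suc_leI)
  define E0 where "E0 = {\<omega> \<in> space M. Limsup mi_at_top (\<lambda>n. ereal (\<bar>partial_sum n X \<omega>\<bar> / bn CARD('d) (idx_size n))) < \<infinity>}"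
  define p where "p = prob E0"
  have p0: "p > 0" unfolding p_def E0_def using LIL .
  have p1: "p \<le> 1" unfolding p_def by (rule prob_le_1)
  have Ym[measurable]: "Y \<in> borel_measurable M" unfolding Y_def by (rule rv[OF ones_pos])
  have Yi': "integrable M Y" unfolding Y_def by (rule Yi)
  define \<mu> where "\<mu> = (\<integral>\<omega>. Y \<omega> \<partial>M)"
  assume "(\<integral>\<omega>. X (\<lambda>_. 1) \<omega> \<partial>M) \<noteq> 0"
  then have mu0: "\<mu> \<noteq> 0" unfolding \<mu>_def Y_def .
  define \<epsilon> where "\<epsilon> = \<bar>\<mu>\<bar> / 4"
  have e0: "\<epsilon> > 0" unfolding \<epsilon>_def using mu0 by simp
  define R where "R i = (\<integral>\<omega>. \<bar>Y \<omega> - clmp (real i) (Y \<omega>)\<bar> \<partial>M)" for i :: nat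
  have "R \<longlonglongrightarrow> (\<integral>\<omega>. 0 \<partial>M)"
    unfolding R_def
  proof (rule integral_dominated_convergence[where w="\<lambda>\<omega>. \<bar>Y \<omega>\<bar>"])
    show "(\<lambda>\<omega>. 0::real) \<in> borel_measurable M" by simp
    show "(\<lambda>\<omega>. \<bar>Y \<omega> - clmp (real i) (Y \<omega>)\<bar>) \<in> borel_measurable M" for i
      using measurable_compose[OF Ym clmp_meas] by measurable
    show "integrable M (\<lambda>\<omega>. \<bar>Y \<omega>\<bar>)" using Yi' by simp
    show "AE \<omega> in M. (\<lambda>i. \<bar>Y \<omega> - clmp (real i) (Y \<omega>)\<bar>) \<longlonglongrightarrow> 0"
    proof (rule AE_I2, rule tendsto_eventually)
      fix \<omega>
      show "eventually (\<lambda>i. \<bar>Y \<omega> - clmp (real i) (Y \<omega>)\<bar> = 0) sequentially"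
        unfolding eventually_sequentially
      proof (intro exI allI impI)
        fix i assume "nat \<lceil>\<bar>Y \<omega>\<bar>\<rceil> \<le> i"
        then have "\<bar>Y \<omega>\<bar> \<le> real i" by linarith
        then show "\<bar>Y \<omega> - clmp (real i) (Y \<omega>)\<bar> = 0" by (simp add: clmp_id)
      qed
    qed
    show "AE \<omega> in M. norm \<bar>Y \<omega> - clmp (real i) (Y \<omega>)\<bar> \<le> \<bar>Y \<omega>\<bar>" for i
      using clmp_diff[of "real i"] by simp
  qed
  then have R0: "R \<longlonglongrightarrow> 0" by simp
  have "eventually (\<lambda>i. R i < \<epsilon> * p / 8) sequentially"
    using order_tendstoD(2)[OF R0, of "\<epsilon> * p / 8"] e0 p0 by simp
  then obtain t0 where Rt0: "R t0 < \<epsilon> * p / 8" by (auto simp: eventually_sequentially)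
  define t where "t = real t0"
  have t0: "t \<ge> 0" unfolding t_def by simp
  define m where "m = (\<integral>\<omega>. clmp t (Y \<omega>) \<partial>M)"
  have cYi: "integrable M (\<lambda>\<omega>. clmp t (Y \<omega>))"
    using measurable_compose[OF Ym clmp_meas] clmp_bound[OF t0] by (intro bnd_int[where C=t]) auto
  have mu_m: "\<bar>\<mu> - m\<bar> \<le> R t0"
  proof -
    have "\<mu> - m = (\<integral>\<omega>. Y \<omega> - clmp t (Y \<omega>) \<partial>M)" unfolding \<mu>_def m_def using Yi' cYi by simp
    also have "\<bar>\<dots>\<bar> \<le> (\<integral>\<omega>. norm (Y \<omega> - clmp t (Y \<omega>)) \<partial>M)" using integral_norm_bound by (metis real_norm_def)
    finally show ?thesis unfolding R_def t_def by simp
  qed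
  have Re: "R t0 \<le> \<epsilon> * p / 8" using Rt0 by simp
  have Rle: "R t0 / \<epsilon> < p / 8" using Rt0 e0 by (simp add: divide_less_eq mult.commute)
  have mu_m': "\<bar>\<mu> - m\<bar> \<le> \<epsilon>"
  proof -
    have "\<epsilon> * p / 8 \<le> \<epsilon>" using e0 p1 by (simp add: field_simps)
    then show ?thesis using mu_m Re by linarith
  qed
  define S where "S k \<omega> = partial_sum (\<lambda>_::'d. k) X \<omega>" for k \<omega>
  have Sm[measurable]: "S k \<in> borel_measurable M" for k unfolding S_def by (rule S_meas)
  define G where "G k = {\<omega>\<in>space M. \<bar>S k \<omega>\<bar> < \<epsilon> * real (k ^ d)}" for k
  define H where "H K = {\<omega>\<in>space M. \<forall>k\<ge>K. \<bar>S k \<omega>\<bar> < \<epsilon> * real (k ^ d)}" for K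
  have Gs: "G k \<in> events" for k unfolding G_def by measurable
  have Hs: "H K \<in> events" for K unfolding H_def by measurable
  have Hinc: "incseq H" unfolding H_def incseq_def by auto
  have HG: "H K \<subseteq> G k" if "K \<le> k" for K k unfolding H_def G_def using that by auto
  have E0H: "E0 \<subseteq> (\<Union>K. H K)"
  proof
    fix \<omega> assume w: "\<omega> \<in> E0"
    then have ws: "\<omega> \<in> space M" unfolding E0_def by simp
    obtain B0 :: real where ev: "eventually (\<lambda>n. ereal (\<bar>partial_sum n X \<omega>\<bar> / bn CARD('d) (idx_size n)) < B0) mi_at_top"
      using limsup_bound w unfolding E0_def by blast
    obtain N0 where N0: "\<forall>n. (\<forall>i. N0 \<le> n i) \<longrightarrow> ereal (\<bar>partial_sum n X \<omega>\<bar> / bn CARD('d) (idx_size n)) < ereal B0"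
      using ev_mi_at_top[OF ev] by blast
    have "eventually (\<lambda>k. bn d (k ^ d) / real (k ^ d) < \<epsilon> / (\<bar>B0\<bar> + 1)) sequentially"
      using order_tendstoD(2)[OF bn_diag_lim[OF d1], of "\<epsilon> / (\<bar>B0\<bar> + 1)"] e0 by simp
    then obtain K2 where K2: "\<And>k. k \<ge> K2 \<Longrightarrow> bn d (k ^ d) / real (k ^ d) < \<epsilon> / (\<bar>B0\<bar> + 1)"
      by (auto simp: eventually_sequentially)
    have "\<omega> \<in> H (max (max N0 K2) 1)"
      unfolding H_def
    proof (intro CollectI conjI allI impI ws)
      fix k assume k: "max (max N0 K2) 1 \<le> k"
      have k1: "k \<ge> 1" using k by simp
      have kp: "real (k ^ d) > 0" using k1 by simp
      have bp: "bn d (k ^ d) > 0" using bn_pos[OF d1, of "k ^ d"] k1 by simp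
      have "ereal (\<bar>S k \<omega>\<bar> / bn d (k ^ d)) < ereal B0"
        using N0[rule_format, of "\<lambda>_. k"] k unfolding S_def idx_size_diag d_def by simp
      then have "\<bar>S k \<omega>\<bar> / bn d (k ^ d) < B0" by simp
      then have "\<bar>S k \<omega>\<bar> < B0 * bn d (k ^ d)" using bp by (simp add: divide_less_eq)
      also have "\<dots> \<le> (\<bar>B0\<bar> + 1) * bn d (k ^ d)" using bp by (intro mult_right_mono) auto
      also have "\<dots> < \<epsilon> * real (k ^ d)"
      proof -
        have "bn d (k ^ d) / real (k ^ d) < \<epsilon> / (\<bar>B0\<bar> + 1)" using K2 k by simp
        then show ?thesis using kp by (simp add: field_simps)
      qed
      finally show "\<bar>S k \<omega>\<bar> < \<epsilon> * real (k ^ d)" .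
    qed
    then show "\<omega> \<in> (\<Union>K. H K)" by blast
  qed
  have E0s: "E0 \<in> events" using p0 unfolding p_def by (metis measure_notin_sets less_irrefl)
  have UHs: "(\<Union>K. H K) \<in> events" using Hs by auto
  have "p \<le> prob (\<Union>K. H K)" unfolding p_def using E0H E0s UHs by (intro finite_measure_mono) auto
  moreover have "(\<lambda>K. prob (H K)) \<longlonglongrightarrow> prob (\<Union>K. H K)"
    using Hs Hinc by (intro finite_Lim_measure_incseq) auto
  ultimately have "eventually (\<lambda>K. prob (H K) > p / 2) sequentially"
    using p0 by (intro order_tendstoD(1)) auto
  then obtain K1 where K1: "prob (H K1) > p / 2" by (auto simp: eventually_sequentially)
  define k where "k = max (max K1 1) (nat \<lceil>32 * t\<^sup>2 / (\<epsilon>\<^sup>2 * p)\<rceil> + 1)"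
  have k1: "k \<ge> 1" and kK1: "K1 \<le> k" unfolding k_def by auto
  have kbig: "real k > 32 * t\<^sup>2 / (\<epsilon>\<^sup>2 * p)" unfolding k_def by linarith
  define Kr where "Kr = real (k ^ d)"
  have Krk: "Kr \<ge> real k" unfolding Kr_def using k1 d1 by (simp add: self_le_power)
  have Kr0: "Kr > 0" using Krk k1 by linarith
  have PG: "prob (G k) > p / 2"
    using K1 finite_measure_mono[OF HG[OF kK1] Gs] by linarith
  define B where "B = boxn (\<lambda>_::'d. k)"
  have Bfin: "finite B" unfolding B_def by (rule finite_box)
  have Bpos: "B \<subseteq> pos_idx" unfolding B_def by (rule box_pos)
  have cardB: "real (card B) = Kr" unfolding B_def Kr_def d_def card_box_diag by simp
  have Xm: "X n \<in> borel_measurable M" if "n \<in> B" for n using rv Bpos that by blast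
  define W where "W \<omega> = (\<Sum>n\<in>B. clmp t (X n \<omega>) - m)" for \<omega>
  define Z where "Z \<omega> = (\<Sum>n\<in>B. \<bar>X n \<omega> - clmp t (X n \<omega>)\<bar>)" for \<omega>
  have Wm: "W \<in> borel_measurable M" unfolding W_def
    using Xm by (intro borel_measurable_sum) (auto intro: measurable_compose[OF _ clmp_meas])
  have Zm: "Z \<in> borel_measurable M" unfolding Z_def
    using Xm by (intro borel_measurable_sum borel_measurable_abs borel_measurable_diff) (auto intro: measurable_compose[OF _ clmp_meas])
  define A1 where "A1 = {\<omega>\<in>space M. \<epsilon> * Kr \<le> \<bar>W \<omega>\<bar>}"
  define A2 where "A2 = {\<omega>\<in>space M. \<epsilon> * Kr \<le> Z \<omega>}"
  have A1s: "A1 \<in> events" unfolding A1_def using Wm by measurable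
  have A2s: "A2 \<in> events" unfolding A2_def using Zm by measurable
  have sub: "G k \<subseteq> A1 \<union> A2"
  proof
    fix \<omega> assume w: "\<omega> \<in> G k"
    then have ws: "\<omega> \<in> space M" and Sl: "\<bar>S k \<omega>\<bar> < \<epsilon> * Kr" unfolding G_def Kr_def by auto
    define D where "D = (\<Sum>n\<in>B. X n \<omega> - clmp t (X n \<omega>))"
    have Seq: "S k \<omega> = W \<omega> + D + Kr * m"
    proof -
      have "W \<omega> + D = (\<Sum>n\<in>B. X n \<omega> - m)" unfolding W_def D_def
        by (simp add: sum.distrib[symmetric])
      also have "\<dots> = S k \<omega> - Kr * m" unfolding S_def ps_box B_def[symmetric]
        using cardB by (simp add: sum_subtractf)
      finally show ?thesis by simp
    qed
    have DZ: "\<bar>D\<bar> \<le> Z \<omega>" unfolding D_def Z_def by (rule sum_abs)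
    have "Kr * \<bar>\<mu>\<bar> = \<bar>S k \<omega> - W \<omega> - D + Kr * (\<mu> - m)\<bar>"
      using Seq Kr0 by (simp add: abs_mult algebra_simps)
    also have "\<dots> \<le> \<bar>S k \<omega>\<bar> + \<bar>W \<omega>\<bar> + \<bar>D\<bar> + Kr * \<bar>\<mu> - m\<bar>"
      using abs4[of "S k \<omega>" "W \<omega>" D "Kr * (\<mu> - m)"] Kr0 by (simp add: abs_mult)
    finally have "Kr * \<bar>\<mu>\<bar> \<le> \<bar>S k \<omega>\<bar> + \<bar>W \<omega>\<bar> + Z \<omega> + Kr * \<epsilon>"
      using DZ mult_left_mono[OF mu_m', of Kr] Kr0 by linarith
    moreover have "Kr * \<bar>\<mu>\<bar> = 4 * (\<epsilon> * Kr)" unfolding \<epsilon>_def by simp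
    ultimately have "\<epsilon> * Kr \<le> \<bar>W \<omega>\<bar> \<or> \<epsilon> * Kr \<le> Z \<omega>" using Sl by (simp add: algebra_simps) linarith
    then show "\<omega> \<in> A1 \<union> A2" unfolding A1_def A2_def using ws by auto
  qed
  have P1: "prob A1 \<le> 4 * t\<^sup>2 / (\<epsilon>\<^sup>2 * Kr)"
  proof -
    have Wb: "\<bar>W \<omega>\<bar> \<le> real (card B) * (t + \<bar>m\<bar>)" for \<omega>
    proof -
      have "\<bar>W \<omega>\<bar> \<le> (\<Sum>n\<in>B. \<bar>clmp t (X n \<omega>) - m\<bar>)" unfolding W_def by (rule sum_abs)
      also have "\<dots> \<le> (\<Sum>n\<in>B. t + \<bar>m\<bar>)"
      proof (rule sum_mono)
        fix n
        have "\<bar>clmp t (X n \<omega>) - m\<bar> \<le> \<bar>clmp t (X n \<omega>)\<bar> + \<bar>m\<bar>" by (rule abs_triangle_ineq4)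
        then show "\<bar>clmp t (X n \<omega>) - m\<bar> \<le> t + \<bar>m\<bar>" using clmp_bound[OF t0, of "X n \<omega>"] by linarith
      qed
      finally show ?thesis by simp
    qed
    have W2i: "integrable M (\<lambda>\<omega>. (W \<omega>)\<^sup>2)"
    proof (rule bnd_int[where C="(real (card B) * (t + \<bar>m\<bar>))\<^sup>2"])
      show "(\<lambda>\<omega>. (W \<omega>)\<^sup>2) \<in> borel_measurable M" using Wm by measurable
      fix \<omega> show "\<bar>(W \<omega>)\<^sup>2\<bar> \<le> (real (card B) * (t + \<bar>m\<bar>))\<^sup>2"
      proof -
        have "\<bar>W \<omega>\<bar>\<^sup>2 \<le> (real (card B) * (t + \<bar>m\<bar>))\<^sup>2" by (rule power_mono[OF Wb]) simp
        then show ?thesis by simp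
      qed
    qed
    have eK: "\<epsilon> * Kr > 0" using e0 Kr0 by simp
    have "A1 \<subseteq> {\<omega>\<in>space M. (\<epsilon> * Kr)\<^sup>2 \<le> (W \<omega>)\<^sup>2}"
    proof safe
      fix \<omega> assume "\<omega> \<in> A1"
      then have "\<epsilon> * Kr \<le> \<bar>W \<omega>\<bar>" unfolding A1_def by simp
      then have "(\<epsilon> * Kr)\<^sup>2 \<le> \<bar>W \<omega>\<bar>\<^sup>2" using eK by (intro power_mono) auto
      then show "(\<epsilon> * Kr)\<^sup>2 \<le> (W \<omega>)\<^sup>2" by simp
    qed (simp add: A1_def)
    then have "prob A1 \<le> prob {\<omega>\<in>space M. (\<epsilon> * Kr)\<^sup>2 \<le> (W \<omega>)\<^sup>2}"
      using Wm by (intro finite_measure_mono) measurable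
    also have "\<dots> \<le> (\<integral>\<omega>. (W \<omega>)\<^sup>2 \<partial>M) / (\<epsilon> * Kr)\<^sup>2"
      using eK by (intro integral_Markov_inequality_measure[OF W2i, where A="space M"]) auto
    also have "\<dots> \<le> (Kr * (2 * t)\<^sup>2) / (\<epsilon> * Kr)\<^sup>2"
    proof (rule divide_right_mono)
      have "(\<integral>\<omega>. (W \<omega>)\<^sup>2 \<partial>M) \<le> real (card B) * (2 * t)\<^sup>2"
        unfolding W_def m_def Y_def by (rule var_bound[OF t0 Bfin Bpos])
      then show "(\<integral>\<omega>. (W \<omega>)\<^sup>2 \<partial>M) \<le> Kr * (2 * t)\<^sup>2" using cardB by simp
    qed simp
    also have "\<dots> = 4 * t\<^sup>2 / (\<epsilon>\<^sup>2 * Kr)" using Kr0 by (simp add: power2_eq_square field_simps)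
    finally show ?thesis .
  qed
  have P2: "prob A2 \<le> R t0 / \<epsilon>"
  proof -
    have gm: "(\<lambda>x. \<bar>x - clmp t x\<bar>) \<in> borel_measurable borel" by measurable
    have gY: "integrable M (\<lambda>\<omega>. \<bar>Y \<omega> - clmp t (Y \<omega>)\<bar>)" using Yi' cYi by simp
    have gi: "integrable M (\<lambda>\<omega>. \<bar>X n \<omega> - clmp t (X n \<omega>)\<bar>)" if "n \<in> B" for n
      using int_same_integrable[OF _ gm, of n] Bpos that gY unfolding Y_def by auto
    have Zi: "integrable M Z" unfolding Z_def by (rule Bochner_Integration.integrable_sum) (rule gi)
    have EZ: "(\<integral>\<omega>. Z \<omega> \<partial>M) = Kr * R t0"
    proof -
      have "(\<integral>\<omega>. Z \<omega> \<partial>M) = (\<Sum>n\<in>B. (\<integral>\<omega>. \<bar>X n \<omega> - clmp t (X n \<omega>)\<bar> \<partial>M))"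
        unfolding Z_def by (rule Bochner_Integration.integral_sum) (rule gi)
      also have "\<dots> = (\<Sum>n\<in>B. R t0)"
      proof (rule sum.cong[OF refl])
        fix n assume "n \<in> B"
        then have np: "n \<in> pos_idx" using Bpos by blast
        show "(\<integral>\<omega>. \<bar>X n \<omega> - clmp t (X n \<omega>)\<bar> \<partial>M) = R t0"
          unfolding R_def t_def[symmetric] Y_def using int_same[OF np gm] by simp
      qed
      also have "\<dots> = Kr * R t0" using cardB by simp
      finally show ?thesis .
    qed
    have eK: "\<epsilon> * Kr > 0" using e0 Kr0 by simp
    have "prob A2 \<le> (\<integral>\<omega>. Z \<omega> \<partial>M) / (\<epsilon> * Kr)"
      unfolding A2_def using eK
      by (intro integral_Markov_inequality_measure[OF Zi, where A="space M"]) (auto simp: Z_def sum_nonneg)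
    also have "\<dots> = R t0 / \<epsilon>" unfolding EZ using Kr0 by (simp add: field_simps)
    finally show ?thesis .
  qed
  have "prob (G k) \<le> prob (A1 \<union> A2)" using sub A1s A2s by (intro finite_measure_mono) auto
  also have "\<dots> \<le> prob A1 + prob A2" using A1s A2s by (intro measure_subadditive) auto
  also have "\<dots> \<le> 4 * t\<^sup>2 / (\<epsilon>\<^sup>2 * Kr) + R t0 / \<epsilon>" using P1 P2 by linarith
  finally have up: "prob (G k) \<le> 4 * t\<^sup>2 / (\<epsilon>\<^sup>2 * Kr) + R t0 / \<epsilon>" .
  have "4 * t\<^sup>2 / (\<epsilon>\<^sup>2 * Kr) < p / 8"
  proof -
    have ep: "\<epsilon>\<^sup>2 * p > 0" using e0 p0 by simp
    have "32 * t\<^sup>2 < real k * (\<epsilon>\<^sup>2 * p)" using kbig ep by (simp add: divide_less_eq)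
    also have "\<dots> \<le> Kr * (\<epsilon>\<^sup>2 * p)" using Krk ep by (intro mult_right_mono) auto
    finally have "32 * t\<^sup>2 < Kr * (\<epsilon>\<^sup>2 * p)" .
    then show ?thesis using Kr0 e0 by (simp add: field_simps)
  qed
  then show False using up PG Rle p0 by linarith
qed

end

theorem theorem1p3:
  fixes M :: "'a measure" and X :: "('d::finite \<Rightarrow> nat) \<Rightarrow> 'a \<Rightarrow> real"
  assumes "prob_space M"
    and rv: "\<And>n. n \<in> pos_idx \<Longrightarrow> X n \<in> borel_measurable M"
    and NA: "neg_assoc M pos_idx X"
    and id: "\<And>n m. n \<in> pos_idx \<Longrightarrow> m \<in> pos_idx \<Longrightarrow> distr M borel (X n) = distr M borel (X m)"
    and LIL: "measure M {\<omega> \<in> space M.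
                Limsup mi_at_top (\<lambda>n. ereal (\<bar>partial_sum n X \<omega>\<bar> /
                   sqrt (2 * real CARD('d) * real (idx_size n) * Log (Log (real (idx_size n))))))
                < \<infinity>} > 0"
  shows "integrable M (X (\<lambda>_. 1)) \<and> (\<integral>\<omega>. X (\<lambda>_. 1) \<omega> \<partial>M) = 0 \<and>
         integrable M (\<lambda>\<omega>. (X (\<lambda>_. 1) \<omega>)\<^sup>2 * (Log \<bar>X (\<lambda>_. 1) \<omega>\<bar>) ^ (CARD('d) - 1)
                              / Log (Log \<bar>X (\<lambda>_. 1) \<omega>\<bar>))"
proof -
  interpret NAF M X
    by (intro NAF.intro NAF_axioms.intro assms(1) rv NA id) auto
  have LIL': "prob {\<omega> \<in> space M. Limsup mi_at_top (\<lambda>n. ereal (\<bar>partial_sum n X \<omega>\<bar> / bn CARD('d) (idx_size n))) < \<infinity>} > 0"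
    using LIL unfolding bn_def .
  have mom: "integrable M (\<lambda>\<omega>. (X (\<lambda>_. 1) \<omega>)\<^sup>2 * (Log \<bar>X (\<lambda>_. 1) \<omega>\<bar>) ^ (CARD('d) - 1)
                              / Log (Log \<bar>X (\<lambda>_. 1) \<omega>\<bar>))"
    by (rule moment[OF LIL'])
  have Yi: "integrable M (X (\<lambda>_. 1))" by (rule Y_int[OF mom])
  have mz: "(\<integral>\<omega>. X (\<lambda>_. 1) \<omega> \<partial>M) = 0" by (rule mean_zero[OF LIL' Yi])
  show ?thesis using mom Yi mz by blast
qed

end
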